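(* Let $(\Omega,\mathcal{A},\pi)$ and $(\Omega',\mathcal{A}',\pi')$ be probability spaces, let $\tau:\Omega\to\Omega'$ be a measure preserving map, and let $W$ be a $\mathcal{Z}$-graphon on $(\Omega,\mathcal{A},\pi)$. (i) There exists a strong $\mathcal{Z}$-graphon $W_\tau$ on $(\Omega',\mathcal{A}',\pi')$ such that for all $A_1',A_2'\in\mathcal{A}'$ and all $\varphi\in\Phi$, \[ \int_{A_1'\times A_2'}\langle\varphi,W_\tau(x',y')\rangle\,d\pi'(x')d\pi'(y')=\int_{\tau^{-1}(A_1')\times\tau^{-1}(A_2')}\langle\varphi,W(x,y)\rangle\,d\pi(x)d\pi(y). \] (ii) If $\tau$ is an embedding, then $(W_\tau)^\tau=W$ almost everywhere, where $(W_\tau)^\tau(x,y):=W_\tau(\tau(x),\tau(y))$.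
   Context: $\Phi$ is a separable real Banach space, $\mathcal{Z}=\Phi^*$, $\langle\varphi,z\rangle=z(\varphi)$. A $\mathcal{Z}$-graphon on $(\Omega,\mathcal{A},\pi)$ is a symmetric function $W:\Omega^2\to\mathcal{Z}$ such that each $(x,y)\mapsto\langle\varphi,W(x,y)\rangle$ ($\varphi\in\Phi$) is measurable w.r.t. the completion $\overline{\mathcal{A}\times\mathcal{A}}$ and $(x,y)\mapsto\|W(x,y)\|_{\mathcal{Z}}$ lies in $L^p(\pi\times\pi)$ for all $1\le p<\infty$; it is strong if each $\langle\varphi,W\rangle$ is $\mathcal{A}\times\mathcal{A}$-measurable. A map $\tau$ is measure preserving if it is measurable and $\pi(\tau^{-1}(A'))=\pi'(A')$ for all $A'\in\mathcal{A}'$. A probability space $(\Omega'',\mathcal{A}'',\pi'')$ is a full subspace of $(\Omega',\mathcal{A}',\pi')$ if $\Omega''\subset\Omega'$ has outer measure $1$, $\mathcal{A}''=\{A\cap\Omega'':A\in\mathcal{A}'\}$ and $\pi''(A\cap\Omega'')=\pi'(A)$. A measure preserving $\tau$ is an embedding if it is an isomorphism (bijective, with measurable measure preserving inverse) between $(\Omega,\mathcal{A},\pi)$ and a full subspace of $(\Omega',\mathcal{A}',\pi')$. *)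

theory Defs
  imports "HOL-Probability.Probability"
begin

(* Phi is modelled by a type 'p of class banach + second_countable_topology
(separable real Banach space); Z = Phi* is the type 'p \<Rightarrow>\<^sub>L real of bounded
linear functionals, with the pairing \<langle>phi, z\<rangle> = blinfun_apply z phi. *)

definition meas_pres :: "'a measure \<Rightarrow> 'b measure \<Rightarrow> ('a \<Rightarrow> 'b) \<Rightarrow> bool" where
  "meas_pres M M' \<tau> \<longleftrightarrow> \<tau> \<in> measurable M M' \<and>
     (\<forall>A'\<in>sets M'. emeasure M (\<tau> -` A' \<inter> space M) = emeasure M' A')"

definition Zgraphon :: "'a measure \<Rightarrow> ('a \<Rightarrow> 'a \<Rightarrow> ('p::{banach,second_countable_topology} \<Rightarrow>\<^sub>L real)) \<Rightarrow> bool" where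
  "Zgraphon M W \<longleftrightarrow>
     (\<forall>x\<in>space M. \<forall>y\<in>space M. W x y = W y x) \<and>
     (\<forall>\<phi>. (\<lambda>z. blinfun_apply (W (fst z) (snd z)) \<phi>) \<in> borel_measurable (completion (M \<Otimes>\<^sub>M M))) \<and>
     (\<lambda>z. norm (W (fst z) (snd z))) \<in> borel_measurable (completion (M \<Otimes>\<^sub>M M)) \<and>
     (\<forall>p::real. 1 \<le> p \<longrightarrow> integrable (completion (M \<Otimes>\<^sub>M M)) (\<lambda>z. norm (W (fst z) (snd z)) powr p))"

definition strong_Zgraphon :: "'a measure \<Rightarrow> ('a \<Rightarrow> 'a \<Rightarrow> ('p::{banach,second_countable_topology} \<Rightarrow>\<^sub>L real)) \<Rightarrow> bool" where
  "strong_Zgraphon M W \<longleftrightarrow> Zgraphon M W \<and>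
     (\<forall>\<phi>. (\<lambda>z. blinfun_apply (W (fst z) (snd z)) \<phi>) \<in> borel_measurable (M \<Otimes>\<^sub>M M))"

(* S is (the carrier of) a full subspace of M': S \<subseteq> space M' has outer measure 1,
i.e. every measurable superset of S has measure 1 (M' is a probability space).
The full subspace has sigma algebra {A \<inter> S | A \<in> sets M'} and measure (A \<inter> S) \<mapsto> measure of A. *)
definition full_subspace :: "'b measure \<Rightarrow> 'b set \<Rightarrow> bool" where
  "full_subspace M' S \<longleftrightarrow> S \<subseteq> space M' \<and> (\<forall>A\<in>sets M'. S \<subseteq> A \<longrightarrow> emeasure M' A = 1)"

(* Embedding: measure preserving, and an isomorphism onto a full subspace S.
Given that tau is measure preserving into M', tau is automatically measurable and
measure preserving into the full subspace; bijectivity onto S plus the last clause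
says exactly that the inverse is measurable and measure preserving. *)
definition embedding :: "'a measure \<Rightarrow> 'b measure \<Rightarrow> ('a \<Rightarrow> 'b) \<Rightarrow> bool" where
  "embedding M M' \<tau> \<longleftrightarrow> meas_pres M M' \<tau> \<and>
     (\<exists>S. full_subspace M' S \<and> bij_betw \<tau> (space M) S \<and>
        (\<forall>B\<in>sets M. \<exists>A\<in>sets M'. \<tau> ` B = A \<inter> S \<and> emeasure M B = emeasure M' A))"

end

theory Submission
  imports Defs
begin


lemma powr_tangent:
  fixes p t u :: real
  assumes p: "p \<ge> 1" and t: "t > 0" and u: "u \<ge> 0"
  shows "t powr p + p * t powr (p - 1) * (u - t) \<le> u powr p"
proof (cases "u = 0")
  case True
  have a: "t powr (p - 1) * t = t powr p" using t by (simp add: powr_diff)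
  have b: "t powr p \<le> p * t powr p" using p t by (simp add: mult_le_cancel_right1)
  have "t powr p + p * t powr (p - 1) * (u - t) = t powr p - p * (t powr (p - 1) * t)"
    using True by (simp add: algebra_simps)
  also have "\<dots> = t powr p - p * t powr p" using a by simp
  also have "\<dots> \<le> 0" using b by simp
  finally show ?thesis using True p by simp
next
  case False
  then have u0: "u > 0" using u by simp
  have "p * t powr (p - 1) * (u - t) \<le> u powr p - t powr p"
  proof (rule convex_on_imp_above_tangent[OF powr_convex[OF p]])
    show "connected {0::real<..}" by simp
    show "t \<in> interior {0<..}" using t by (simp add: interior_open)
    show "u \<in> {0<..}" using u0 by simp
    show "((\<lambda>x. x powr p) has_field_derivative p * t powr (p - 1)) (at t within {0<..})"
      using has_real_derivative_powr[OF t, of p] by (rule has_field_derivative_at_within)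
  qed
  then show ?thesis by simp
qed

lemma ind_int: "A \<in> sets M \<Longrightarrow> integrable M f \<Longrightarrow> integrable M (\<lambda>x. indicator A x * (f x::real))"
  using integrable_mult_indicator[of A M f] by simp

lemma set_integrals_nonneg_AE:
  fixes u :: "'b \<Rightarrow> real"
  assumes u: "integrable N u" and pos: "\<And>E. E \<in> sets N \<Longrightarrow> 0 \<le> set_lebesgue_integral N E u"
  shows "AE x in N. 0 \<le> u x"
proof -
  define E where "E = {x\<in>space N. u x < 0}"
  have [measurable]: "u \<in> borel_measurable N" using u by (rule borel_measurable_integrable)
  have E: "E \<in> sets N" unfolding E_def by measurable
  have int: "integrable N (\<lambda>x. indicator E x * - u x)"
    using u by (intro ind_int E integrable_minus)
  have nn: "AE x in N. 0 \<le> indicator E x * - u x"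
  proof (rule AE_I2)
    fix x show "0 \<le> indicator E x * - u x" by (cases "x \<in> E") (simp_all add: E_def)
  qed
  have "integral\<^sup>L N (\<lambda>x. indicator E x * - u x) = - set_lebesgue_integral N E u"
    unfolding set_lebesgue_integral_def by simp
  moreover have "0 \<le> integral\<^sup>L N (\<lambda>x. indicator E x * - u x)"
    using nn by (rule integral_nonneg_AE)
  ultimately have "integral\<^sup>L N (\<lambda>x. indicator E x * - u x) = 0" using pos[OF E] by linarith
  then have "AE x in N. indicator E x * - u x = 0" using integral_nonneg_eq_0_iff_AE[OF int nn] by simp
  with AE_space show ?thesis
  proof eventually_elim
    case (elim x)
    show ?case
    proof (cases "x \<in> E")
      case True
      then show ?thesis using elim by (simp add: E_def)
    next
      case False
      then show ?thesis using elim by (simp add: E_def not_less)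
    qed
  qed
qed

lemma set_integrals_eq_AE:
  fixes u v :: "'b \<Rightarrow> real"
  assumes u: "integrable N u" and v: "integrable N v"
    and eq: "\<And>E. E \<in> sets N \<Longrightarrow> set_lebesgue_integral N E u = set_lebesgue_integral N E v"
  shows "AE x in N. u x = v x"
proof -
  have si: "set_integrable N E u" "set_integrable N E v" if "E \<in> sets N" for E
    using u v that unfolding set_integrable_def by (auto intro: ind_int)
  have "AE x in N. 0 \<le> u x - v x"
  proof (rule set_integrals_nonneg_AE)
    show "integrable N (\<lambda>x. u x - v x)" using u v by (rule Bochner_Integration.integrable_diff)
    fix E assume E: "E \<in> sets N"
    show "0 \<le> set_lebesgue_integral N E (\<lambda>x. u x - v x)"
      using set_integral_diff(2)[OF si[OF E]] eq[OF E] by simp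
  qed
  moreover have "AE x in N. 0 \<le> v x - u x"
  proof (rule set_integrals_nonneg_AE)
    show "integrable N (\<lambda>x. v x - u x)" using v u by (rule Bochner_Integration.integrable_diff)
    fix E assume E: "E \<in> sets N"
    show "0 \<le> set_lebesgue_integral N E (\<lambda>x. v x - u x)"
      using set_integral_diff(2)[OF si(2)[OF E] si(1)[OF E]] eq[OF E] by simp
  qed
  ultimately show ?thesis by eventually_elim linarith
qed

lemma set_int_ennreal:
  fixes h :: "'a \<Rightarrow> real"
  assumes h: "integrable M h" "\<And>x. 0 \<le> h x" and A: "A \<in> sets M"
  shows "ennreal (set_lebesgue_integral M A h) = (\<integral>\<^sup>+ x. ennreal (h x) * indicator A x \<partial>M)"
proof -
  have "(\<integral>\<^sup>+ x. ennreal (indicator A x * h x) \<partial>M) = ennreal (integral\<^sup>L M (\<lambda>x. indicator A x * h x))"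
    by (rule nn_integral_eq_integral) (use h A in \<open>auto intro: ind_int\<close>)
  moreover have "(\<lambda>x. ennreal (indicator A x * h x)) = (\<lambda>x. ennreal (h x) * indicator A x)"
    by (auto split: split_indicator)
  ultimately show ?thesis by (simp add: set_lebesgue_integral_def)
qed

lemma set_int_nonneg:
  fixes h :: "'a \<Rightarrow> real"
  assumes "\<And>x. 0 \<le> h x" shows "0 \<le> set_lebesgue_integral M A h"
  unfolding set_lebesgue_integral_def using assms by (auto intro!: integral_nonneg_AE)

lemma push_nonneg:
  fixes f :: "'a \<Rightarrow> real"
  assumes K: "finite_measure K" and N: "sigma_finite_measure N"
    and rho[measurable]: "\<rho> \<in> measurable K N" and dist: "distr K N \<rho> = N"
    and f: "integrable K f" "\<And>x. 0 \<le> f x"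
  shows "\<exists>g\<in>borel_measurable N. integrable N g \<and>
     (\<forall>E\<in>sets N. set_lebesgue_integral N E g = set_lebesgue_integral K (\<rho> -` E \<inter> space K) f)"
proof -
  interpret N: sigma_finite_measure N by fact
  have fm[measurable]: "f \<in> borel_measurable K" using f(1) by (rule borel_measurable_integrable)
  define \<nu> where "\<nu> = distr (density K f) N \<rho>"
  have sets_nu: "sets \<nu> = sets N" by (simp add: \<nu>_def)
  have em: "emeasure \<nu> A = (\<integral>\<^sup>+ x. ennreal (f x) * indicator (\<rho> -` A \<inter> space K) x \<partial>K)" if A: "A \<in> sets N" for A
  proof -
    have "\<rho> -` A \<inter> space K \<in> sets K" using A rho by measurable
    then show ?thesis unfolding \<nu>_def using A by (simp add: emeasure_distr emeasure_density)
  qed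
  have em2: "emeasure \<nu> A = ennreal (set_lebesgue_integral K (\<rho> -` A \<inter> space K) f)" if A: "A \<in> sets N" for A
  proof -
    have "\<rho> -` A \<inter> space K \<in> sets K" using A rho by measurable
    then show ?thesis using em[OF A] set_int_ennreal[OF f] by simp
  qed
  have "space \<nu> = space N" by (simp add: \<nu>_def)
  then have fin: "finite_measure \<nu>" using em2[of "space N"] by (intro finite_measureI) simp
  have ac: "absolutely_continuous N \<nu>"
    unfolding absolutely_continuous_def
  proof
    fix A assume A: "A \<in> null_sets N"
    then have As: "A \<in> sets N" by auto
    have "emeasure K (\<rho> -` A \<inter> space K) = emeasure N A"
      using As by (subst dist[symmetric]) (simp add: emeasure_distr)
    moreover have "\<rho> -` A \<inter> space K \<in> sets K" using As by measurable
    ultimately have "\<rho> -` A \<inter> space K \<in> null_sets K" using A by (intro null_setsI) auto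
    then have "emeasure \<nu> A = 0" using em[OF As] by (simp add: nn_integral_null_set)
    then show "A \<in> null_sets \<nu>" using As sets_nu by (auto intro: null_setsI)
  qed
  obtain D where Dm[measurable]: "D \<in> borel_measurable N" and Dae: "AE x in N. RN_deriv N \<nu> x = ennreal (D x)"
    and D0: "\<And>x. 0 \<le> D x"
    using N.real_RN_deriv[OF fin ac sets_nu] by blast
  have dens: "density N (RN_deriv N \<nu>) = \<nu>" by (rule N.density_RN_deriv[OF ac sets_nu])
  have nuE: "emeasure \<nu> E = (\<integral>\<^sup>+ x. ennreal (D x) * indicator E x \<partial>N)" if E: "E \<in> sets N" for E
  proof -
    have "emeasure \<nu> E = (\<integral>\<^sup>+ x. RN_deriv N \<nu> x * indicator E x \<partial>N)"
      using E by (subst dens[symmetric]) (simp add: emeasure_density)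
    also have "\<dots> = (\<integral>\<^sup>+ x. ennreal (D x) * indicator E x \<partial>N)"
      using Dae by (intro nn_integral_cong_AE) auto
    finally show ?thesis .
  qed
  have intD: "integrable N D"
  proof (rule integrableI_nonneg)
    have "(\<integral>\<^sup>+x. ennreal (D x) * indicator (space N) x \<partial>N) = (\<integral>\<^sup>+x. ennreal (D x) \<partial>N)"
      by (rule nn_integral_cong) simp
    then have "(\<integral>\<^sup>+ x. ennreal (D x) \<partial>N) = emeasure \<nu> (space N)"
      using nuE[of "space N"] by simp
    also have "\<dots> < \<infinity>" using em2[of "space N"] by simp
    finally show "(\<integral>\<^sup>+ x. ennreal (D x) \<partial>N) < \<infinity>" .
  qed (use D0 in simp_all)
  show ?thesis
  proof (intro bexI conjI ballI)
    fix E assume E: "E \<in> sets N"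
    have "ennreal (set_lebesgue_integral N E D) = ennreal (set_lebesgue_integral K (\<rho> -` E \<inter> space K) f)"
      using set_int_ennreal[OF intD D0 E] nuE[OF E] em2[OF E] by simp
    moreover have "0 \<le> set_lebesgue_integral N E D" using D0 by (rule set_int_nonneg)
    moreover have "0 \<le> set_lebesgue_integral K (\<rho> -` E \<inter> space K) f" using f(2) by (rule set_int_nonneg)
    ultimately show "set_lebesgue_integral N E D = set_lebesgue_integral K (\<rho> -` E \<inter> space K) f"
      by (simp only: ennreal_inj)
  qed (use intD in auto)
qed

lemma push_exists:
  fixes f :: "'a \<Rightarrow> real"
  assumes K: "finite_measure K" and N: "sigma_finite_measure N"
    and rho[measurable]: "\<rho> \<in> measurable K N" and dist: "distr K N \<rho> = N"
    and f: "integrable K f"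
  shows "\<exists>g\<in>borel_measurable N. integrable N g \<and>
     (\<forall>E\<in>sets N. set_lebesgue_integral N E g = set_lebesgue_integral K (\<rho> -` E \<inter> space K) f)"
proof -
  have i1: "integrable K (\<lambda>x. max (f x) 0)" and i2: "integrable K (\<lambda>x. max (- f x) 0)"
    using f by (auto intro: integrable_max integrable_minus)
  obtain g1 where g1: "g1 \<in> borel_measurable N" "integrable N g1"
    "\<forall>E\<in>sets N. set_lebesgue_integral N E g1 = set_lebesgue_integral K (\<rho> -` E \<inter> space K) (\<lambda>x. max (f x) 0)"
    using push_nonneg[OF K N rho dist i1] by auto
  obtain g2 where g2: "g2 \<in> borel_measurable N" "integrable N g2"
    "\<forall>E\<in>sets N. set_lebesgue_integral N E g2 = set_lebesgue_integral K (\<rho> -` E \<inter> space K) (\<lambda>x. max (- f x) 0)"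
    using push_nonneg[OF K N rho dist i2] by auto
  show ?thesis
  proof (intro bexI conjI ballI)
    show "integrable N (\<lambda>x. g1 x - g2 x)" using g1 g2 by (intro Bochner_Integration.integrable_diff) auto
    show "(\<lambda>x. g1 x - g2 x) \<in> borel_measurable N" using g1 g2 by measurable
    fix E assume E: "E \<in> sets N"
    have pE: "\<rho> -` E \<inter> space K \<in> sets K" using E by measurable
    have si1: "set_integrable N E g1" "set_integrable N E g2"
      using g1 g2 E unfolding set_integrable_def by (auto intro: ind_int)
    have si2: "set_integrable K (\<rho> -` E \<inter> space K) (\<lambda>x. max (f x) 0)"
      "set_integrable K (\<rho> -` E \<inter> space K) (\<lambda>x. max (- f x) 0)"
      using i1 i2 pE unfolding set_integrable_def by (auto intro: ind_int)
    have "set_lebesgue_integral N E (\<lambda>x. g1 x - g2 x) = set_lebesgue_integral N E g1 - set_lebesgue_integral N E g2"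
      by (rule set_integral_diff(2)[OF si1])
    also have "\<dots> = set_lebesgue_integral K (\<rho> -` E \<inter> space K) (\<lambda>x. max (f x) 0)
        - set_lebesgue_integral K (\<rho> -` E \<inter> space K) (\<lambda>x. max (- f x) 0)"
      using g1(3) g2(3) E by simp
    also have "\<dots> = set_lebesgue_integral K (\<rho> -` E \<inter> space K) (\<lambda>x. max (f x) 0 - max (- f x) 0)"
      by (rule set_integral_diff(2)[OF si2, symmetric])
    also have "(\<lambda>x. max (f x) 0 - max (- f x) 0) = f" by (auto simp: max_def)
    finally show "set_lebesgue_integral N E (\<lambda>x. g1 x - g2 x) = set_lebesgue_integral K (\<rho> -` E \<inter> space K) f" .
  qed
qed


lemma set_int_affine:
  fixes f :: "'a \<Rightarrow> real"
  assumes M: "finite_measure M" and A: "A \<in> sets M" and f: "integrable M f"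
  shows "(LINT x:A|M. a + c * f x) = a * measure M A + c * (LINT x:A|M. f x)"
proof -
  interpret finite_measure M by fact
  have i1: "integrable M (\<lambda>x. a * indicator A x)" using ind_int[OF A, of "\<lambda>_. a"] by (simp add: mult.commute)
  have i2: "integrable M (\<lambda>x. c * (indicator A x * f x))" using A f by (intro integrable_mult_right ind_int)
  have "(LINT x:A|M. a + c * f x) = integral\<^sup>L M (\<lambda>x. a * indicator A x + c * (indicator A x * f x))"
    unfolding set_lebesgue_integral_def by (intro Bochner_Integration.integral_cong) (auto simp: algebra_simps)
  also have "\<dots> = integral\<^sup>L M (\<lambda>x. a * indicator A x) + integral\<^sup>L M (\<lambda>x. c * (indicator A x * f x))"
    by (rule Bochner_Integration.integral_add[OF i1 i2])
  also have "\<dots> = a * measure M A + c * (LINT x:A|M. f x)"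
    using A unfolding set_lebesgue_integral_def by simp
  finally show ?thesis .
qed

lemma set_int_const_real:
  assumes M: "finite_measure M" and A: "A \<in> sets M"
  shows "(LINT x:A|M. (c::real)) = c * measure M A"
  using set_int_affine[OF M A, of "\<lambda>_. 0" c 0] by simp

lemma jensen_push:
  fixes f :: "'a \<Rightarrow> real" and g k :: "'b \<Rightarrow> real"
  assumes K: "finite_measure K" and N: "finite_measure N"
    and rho[measurable]: "\<rho> \<in> measurable K N" and dist: "distr K N \<rho> = N"
    and p: "p \<ge> 1"
    and f: "integrable K f" "\<And>x. 0 \<le> f x" "integrable K (\<lambda>x. f x powr p)"
    and g: "integrable N g" "\<And>E. E \<in> sets N \<Longrightarrow> set_lebesgue_integral N E g = set_lebesgue_integral K (\<rho> -` E \<inter> space K) f"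
    and k: "integrable N k" "\<And>E. E \<in> sets N \<Longrightarrow> set_lebesgue_integral N E k = set_lebesgue_integral K (\<rho> -` E \<inter> space K) (\<lambda>x. f x powr p)"
  shows "AE z in N. 0 < g z \<longrightarrow> g z powr p \<le> k z"
proof -
  interpret N: finite_measure N by fact
  interpret K: finite_measure K by fact
  have [measurable]: "g \<in> borel_measurable N" "k \<in> borel_measurable N" "f \<in> borel_measurable K"
    using g k f by (auto intro: borel_measurable_integrable)
  have mpre: "measure K (\<rho> -` E \<inter> space K) = measure N E" if "E \<in> sets N" for E
    using measure_distr[OF rho that] dist by simp
  have key: "AE z in N. \<not> (t < g z \<and> k z < s)" if ts: "0 < t" "s < t powr p" for t s
  proof -
    define E where "E = {z \<in> space N. t < g z \<and> k z < s}"
    have E[measurable]: "E \<in> sets N" unfolding E_def by measurable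
    have pE: "\<rho> -` E \<inter> space K \<in> sets K" by measurable
    define m where "m = measure N E"
    have m0: "0 \<le> m" unfolding m_def by simp
    have siN: "set_integrable N E h" if "integrable N h" for h :: "'b \<Rightarrow> real"
      using that unfolding set_integrable_def by (rule integrable_mult_indicator[OF E])
    have siK: "set_integrable K (\<rho> -` E \<inter> space K) h" if "integrable K h" for h :: "'a \<Rightarrow> real"
      using that unfolding set_integrable_def by (rule integrable_mult_indicator[OF pE])
    have a1: "set_lebesgue_integral N E k \<le> s * m"
    proof -
      have "set_lebesgue_integral N E k \<le> (LINT z:E|N. s)"
        by (rule set_integral_mono[OF siN[OF k(1)] siN]) (auto simp: E_def)
      then show ?thesis using set_int_const_real[OF N E, of s] by (simp add: m_def)
    qed
    have a2: "t * m \<le> set_lebesgue_integral N E g"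
    proof -
      have "(LINT z:E|N. t) \<le> set_lebesgue_integral N E g"
        by (rule set_integral_mono[OF siN siN[OF g(1)]]) (auto simp: E_def)
      then show ?thesis using set_int_const_real[OF N E, of t] by (simp add: m_def mult.commute)
    qed
    define c where "c = p * t powr (p - 1)"
    have c0: "0 \<le> c" unfolding c_def using p ts by simp
    have a3: "(LINT x:(\<rho> -` E \<inter> space K)|K. (t powr p - c * t) + c * f x)
        \<le> set_lebesgue_integral K (\<rho> -` E \<inter> space K) (\<lambda>x. f x powr p)"
    proof (rule set_integral_mono)
      show "set_integrable K (\<rho> -` E \<inter> space K) (\<lambda>x. t powr p - c * t + c * f x)"
        using f(1) by (intro siK) auto
      show "set_integrable K (\<rho> -` E \<inter> space K) (\<lambda>x. f x powr p)" by (rule siK[OF f(3)])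
      fix x
      have "t powr p + c * (f x - t) \<le> f x powr p"
        using powr_tangent[OF p ts(1) f(2)[of x]] unfolding c_def by simp
      moreover have "t powr p - c * t + c * f x = t powr p + c * (f x - t)" by (simp add: algebra_simps)
      ultimately show "t powr p - c * t + c * f x \<le> f x powr p" by linarith
    qed
    have eqA: "(LINT x:(\<rho> -` E \<inter> space K)|K. (t powr p - c * t) + c * f x)
        = (t powr p - c * t) * measure K (\<rho> -` E \<inter> space K) + c * set_lebesgue_integral K (\<rho> -` E \<inter> space K) f"
      by (rule set_int_affine[OF K pE f(1)])
    have "(LINT x:(\<rho> -` E \<inter> space K)|K. (t powr p - c * t) + c * f x)
        = (t powr p - c * t) * m + c * set_lebesgue_integral N E g"
      using eqA by (simp only: m_def mpre[OF E] g(2)[OF E])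
    with a3 k(2)[OF E] have X: "(t powr p - c * t) * m + c * set_lebesgue_integral N E g \<le> set_lebesgue_integral N E k"
      by simp
    have Y: "c * (t * m) \<le> c * set_lebesgue_integral N E g" using a2 c0 by (rule mult_left_mono)
    have Z: "t powr p * m = (t powr p - c * t) * m + c * (t * m)" by (simp add: algebra_simps)
    have "t powr p * m \<le> s * m" using X Y Z a1 by linarith
    then have "m = 0"
    proof (rule contrapos_pp)
      assume "m \<noteq> 0"
      then have "0 < m" using m0 by simp
      have "s * m < t powr p * m" using mult_strict_right_mono[OF ts(2) \<open>0 < m\<close>] .
      then show "\<not> t powr p * m \<le> s * m" by linarith
    qed
    then have "emeasure N E = 0" by (simp add: m_def N.emeasure_eq_measure)
    moreover have "{z \<in> space N. \<not> \<not> (t < g z \<and> k z < s)} = E" by (simp add: E_def)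
    ultimately show ?thesis using AE_iff_measurable[OF E, of "\<lambda>z. \<not> (t < g z \<and> k z < s)"] by simp
  qed
  have key2: "AE z in N. (0 < t \<and> s < t powr p) \<longrightarrow> \<not> (t < g z \<and> k z < s)" for t s
  proof (cases "0 < t \<and> s < t powr p")
    case True
    with key[of t s] show ?thesis by simp
  next
    case False
    then show ?thesis by (intro AE_I2) blast
  qed
  have "AE z in N. \<forall>t\<in>\<rat>. \<forall>s\<in>\<rat>. (0 < t \<and> s < t powr p) \<longrightarrow> \<not> (t < g z \<and> k z < s)"
    by (intro AE_ball_countable' countable_rat key2)
  then show ?thesis
  proof eventually_elim
    case (elim z)
    show ?case
    proof (rule impI, rule ccontr)
      assume gz: "0 < g z" and "\<not> g z powr p \<le> k z"
      then have lt: "max 0 (k z) < g z powr p" using gz by simp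
      define r where "r = max 0 (k z) powr (1 / p)"
      have r0: "0 \<le> r" unfolding r_def by simp
      have "r < (g z powr p) powr (1 / p)" unfolding r_def
        using lt p by (intro powr_less_mono2) simp_all
      moreover have "(g z powr p) powr (1 / p) = g z" using p gz by (simp add: powr_powr)
      ultimately have rg: "r < g z" by simp
      obtain t where t: "t \<in> \<rat>" "r < t" "t < g z" using Rats_dense_in_real[OF rg] by blast
      have t0: "0 < t" using r0 t by simp
      have "r powr p < t powr p" using r0 t(2) p by (intro powr_less_mono2) simp_all
      moreover have "r powr p = max 0 (k z)" unfolding r_def using p by (simp add: powr_powr)
      ultimately have "k z < t powr p" by simp
      then obtain s where s: "s \<in> \<rat>" "k z < s" "s < t powr p" using Rats_dense_in_real[of "k z" "t powr p"] by blast
      have "\<not> (t < g z \<and> k z < s)" using elim t(1) s(1) t0 s(3) by blast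
      then show False using t(3) s(2) by simp
    qed
  qed
qed



definition Qspan :: "'p::real_vector set \<Rightarrow> 'p set" where
  "Qspan C = (\<lambda>xs. sum_list (map (\<lambda>(q,c). q *\<^sub>R c) xs)) ` lists (\<rat> \<times> C)"

lemma scaleR_sum_list_map: fixes xs :: "(real \<times> 'p::real_vector) list" shows "(r::real) *\<^sub>R sum_list (map (\<lambda>(q,c). q *\<^sub>R c) xs) =
   sum_list (map (\<lambda>(q,c). q *\<^sub>R c) (map (\<lambda>(q,c). (r*q, c)) xs))"
  by (induction xs) (auto simp: scaleR_add_right case_prod_beta)

lemma Qspan_add: "a \<in> Qspan C \<Longrightarrow> b \<in> Qspan C \<Longrightarrow> a + b \<in> Qspan C"
  unfolding Qspan_def
  apply (elim imageE)
  subgoal for xs ys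
    by (rule image_eqI[of _ _ "xs @ ys"]) auto
  done

lemma Qspan_scale: "q \<in> \<rat> \<Longrightarrow> a \<in> Qspan C \<Longrightarrow> q *\<^sub>R a \<in> Qspan C"
  unfolding Qspan_def
  apply (elim imageE)
  subgoal for xs
    apply (rule image_eqI[of _ _ "map (\<lambda>(r,c). (q*r, c)) xs"])
     apply (simp add: scaleR_sum_list_map)
    by (force intro: Rats_mult)
  done

lemma Qspan_sup: "c \<in> C \<Longrightarrow> c \<in> Qspan C"
  unfolding Qspan_def by (rule image_eqI[of _ _ "[(1,c)]"]) auto

lemma Qspan_countable: "countable C \<Longrightarrow> countable (Qspan C)"
  unfolding Qspan_def by (intro countable_image countable_lists countable_SIGMA countable_rat)

definition goodD :: "'p::real_normed_vector set \<Rightarrow> bool" where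
  "goodD D \<longleftrightarrow> countable D \<and> (\<forall>a\<in>D. \<forall>b\<in>D. a+b\<in>D) \<and> (\<forall>q\<in>\<rat>. \<forall>a\<in>D. q*\<^sub>R a \<in> D)
     \<and> (\<forall>\<phi>. \<forall>e>0. \<exists>d\<in>D. dist d \<phi> < e)"

lemma goodD_exists: "\<exists>D::'p::{real_normed_vector,second_countable_topology} set. goodD D"
proof -
  obtain C :: "'p set" where C: "countable C" "\<And>X. open X \<Longrightarrow> X \<noteq> {} \<Longrightarrow> \<exists>d \<in> C. d \<in> X"
    using countable_dense_setE by blast
  have "goodD (Qspan C)"
    unfolding goodD_def
  proof (intro conjI ballI allI impI)
    show "countable (Qspan C)" using C(1) by (rule Qspan_countable)
    fix \<phi> :: 'p and e :: real assume "e > 0"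
    then obtain d where "d \<in> C" "d \<in> ball \<phi> e" using C(2)[of "ball \<phi> e"] by auto
    then show "\<exists>d\<in>Qspan C. dist d \<phi> < e"
      by (intro bexI[of _ d]) (auto simp: Qspan_sup dist_commute)
  qed (auto intro: Qspan_add Qspan_scale)
  then show ?thesis by blast
qed

lemma goodD_add: "goodD D \<Longrightarrow> a \<in> D \<Longrightarrow> b \<in> D \<Longrightarrow> a + b \<in> D"
  by (simp add: goodD_def)
lemma goodD_scale: "goodD D \<Longrightarrow> q \<in> \<rat> \<Longrightarrow> a \<in> D \<Longrightarrow> q *\<^sub>R a \<in> D"
  by (simp add: goodD_def)
lemma goodD_diff: "goodD D \<Longrightarrow> a \<in> D \<Longrightarrow> b \<in> D \<Longrightarrow> a - b \<in> D"
  using goodD_add[of D a "(-1) *\<^sub>R b"] goodD_scale[of D "-1" b] by simp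
lemma goodD_countable: "goodD D \<Longrightarrow> countable D"
  by (simp add: goodD_def)

definition dseq :: "'p::real_normed_vector set \<Rightarrow> 'p \<Rightarrow> nat \<Rightarrow> 'p" where
  "dseq D \<phi> n = (SOME d. d \<in> D \<and> dist d \<phi> < 1 / Suc n)"

lemma dseq: assumes "goodD D" shows "dseq D \<phi> n \<in> D" "dist (dseq D \<phi> n) \<phi> < 1 / Suc n"
proof -
  have "1 / Suc n > (0::real)" by simp
  then have "\<exists>d. d \<in> D \<and> dist d \<phi> < 1 / Suc n" using assms unfolding goodD_def by blast
  from someI_ex[OF this] show "dseq D \<phi> n \<in> D" "dist (dseq D \<phi> n) \<phi> < 1 / Suc n"
    unfolding dseq_def by auto
qed

lemma dseq_lim: assumes "goodD D" shows "dseq D \<phi> \<longlonglongrightarrow> \<phi>"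
proof -
  have "(\<lambda>n. dseq D \<phi> n - \<phi>) \<longlonglongrightarrow> 0"
  proof (rule Lim_null_comparison)
    show "\<forall>\<^sub>F n in sequentially. norm (dseq D \<phi> n - \<phi>) \<le> inverse (real (Suc n))"
      by (intro always_eventually allI) (use dseq(2)[OF assms] in \<open>auto simp: dist_norm field_simps intro!: less_imp_le\<close>)
  qed (rule LIMSEQ_inverse_real_of_nat)
  then show ?thesis by (simp add: LIM_zero_iff)
qed

definition Qlin :: "'p::real_vector set \<Rightarrow> ('p \<Rightarrow> real) \<Rightarrow> bool" where
  "Qlin D h \<longleftrightarrow> (\<forall>a\<in>D. \<forall>b\<in>D. h (a+b) = h a + h b) \<and> (\<forall>q\<in>\<rat>. \<forall>a\<in>D. h (q *\<^sub>R a) = q * h a)"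

definition ext :: "'p::real_normed_vector set \<Rightarrow> ('p \<Rightarrow> real) \<Rightarrow> 'p \<Rightarrow> real" where
  "ext D h \<phi> = lim (\<lambda>n. h (dseq D \<phi> n))"

lemma Qlin_diff: assumes "goodD D" "Qlin D h" "a \<in> D" "b \<in> D" shows "h (a - b) = h a - h b"
proof -
  have "h (a + (-1) *\<^sub>R b) = h a + h ((-1) *\<^sub>R b)"
    using assms goodD_scale[of D "-1" b] unfolding Qlin_def by auto
  also have "h ((-1) *\<^sub>R b) = - h b" using assms unfolding Qlin_def
    by (metis Rats_minus_iff Rats_1 mult_minus1)
  finally show ?thesis by simp
qed

lemma Cauchy_transfer:
  fixes f :: "nat \<Rightarrow> 'p::metric_space" and g :: "nat \<Rightarrow> 'q::metric_space"
  assumes "Cauchy f" "C \<ge> 0" "\<And>m n. dist (g m) (g n) \<le> C * dist (f m) (f n)"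
  shows "Cauchy g"
proof (rule metric_CauchyI)
  fix e :: real assume "e > 0"
  then have "e / (C+1) > 0" using assms by auto
  then obtain M where M: "\<forall>m\<ge>M. \<forall>n\<ge>M. dist (f m) (f n) < e / (C+1)"
    using metric_CauchyD[OF assms(1)] by blast
  show "\<exists>M. \<forall>m\<ge>M. \<forall>n\<ge>M. dist (g m) (g n) < e"
  proof (intro exI allI impI)
    fix m n assume "M \<le> m" "M \<le> n"
    then have "dist (f m) (f n) < e / (C+1)" using M by auto
    then have "C * dist (f m) (f n) \<le> C * (e / (C+1))" using assms(2) by (intro mult_left_mono) auto
    also have "\<dots> < e" using \<open>e>0\<close> assms(2) by (simp add: field_simps)
    finally show "dist (g m) (g n) < e" using assms(3)[of m n] by linarith
  qed
qed

lemma ext_conv: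
  assumes D: "goodD D" and h: "Qlin D h" and C: "C \<ge> 0" "\<And>a. a \<in> D \<Longrightarrow> \<bar>h a\<bar> \<le> C * norm a"
    and e: "\<And>n. e n \<in> D" "e \<longlonglongrightarrow> \<phi>"
  shows "(\<lambda>n. h (e n)) \<longlonglongrightarrow> ext D h \<phi>"
proof -
  have lip: "dist (h a) (h b) \<le> C * dist a b" if "a \<in> D" "b \<in> D" for a b
    using C(2)[of "a - b"] Qlin_diff[OF D h that] goodD_diff[OF D that]
    by (simp add: dist_norm)
  have "Cauchy (dseq D \<phi>)" using dseq_lim[OF D] by (rule LIMSEQ_imp_Cauchy)
  then have "Cauchy (\<lambda>n. h (dseq D \<phi> n))"
    by (rule Cauchy_transfer[OF _ C(1)]) (intro lip dseq[OF D])
  then have lim: "(\<lambda>n. h (dseq D \<phi> n)) \<longlonglongrightarrow> ext D h \<phi>"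
    unfolding ext_def by (simp add: Cauchy_convergent_iff convergent_LIMSEQ_iff)
  have "(\<lambda>n. h (e n) - h (dseq D \<phi> n)) \<longlonglongrightarrow> 0"
  proof (rule Lim_null_comparison)
    show "\<forall>\<^sub>F n in sequentially. norm (h (e n) - h (dseq D \<phi> n)) \<le> C * norm (e n - dseq D \<phi> n)"
      using lip[OF e(1) dseq(1)[OF D]] by (simp add: dist_norm)
    have "(\<lambda>n. e n - dseq D \<phi> n) \<longlonglongrightarrow> \<phi> - \<phi>" by (intro tendsto_intros e dseq_lim D)
    then show "(\<lambda>n. C * norm (e n - dseq D \<phi> n)) \<longlonglongrightarrow> 0"
      using tendsto_mult_right_zero tendsto_norm_zero by fastforce
  qed
  from tendsto_add[OF this lim] show ?thesis by simp
qed

lemma ext_props: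
  assumes D: "goodD D" and h: "Qlin D h" and C: "C \<ge> 0" "\<And>a. a \<in> D \<Longrightarrow> \<bar>h a\<bar> \<le> C * norm a"
  shows "bounded_linear (ext D h)" "\<And>a. a \<in> D \<Longrightarrow> ext D h a = h a"
    "\<And>\<phi>. \<bar>ext D h \<phi>\<bar> \<le> C * norm \<phi>"
    "\<And>\<phi>. (\<lambda>n. h (dseq D \<phi> n)) \<longlonglongrightarrow> ext D h \<phi>"
proof -
  note conv = ext_conv[OF D h C]
  show lim: "(\<lambda>n. h (dseq D \<phi> n)) \<longlonglongrightarrow> ext D h \<phi>" for \<phi>
    by (rule conv) (auto intro: dseq D dseq_lim)
  show "ext D h a = h a" if "a \<in> D" for a
    using conv[of "\<lambda>n. a" a] that LIMSEQ_unique by (metis tendsto_const)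
  show bnd: "\<bar>ext D h \<phi>\<bar> \<le> C * norm \<phi>" for \<phi>
  proof -
    have 1: "(\<lambda>n. \<bar>h (dseq D \<phi> n)\<bar>) \<longlonglongrightarrow> \<bar>ext D h \<phi>\<bar>" by (intro tendsto_intros lim)
    have 2: "(\<lambda>n. C * norm (dseq D \<phi> n)) \<longlonglongrightarrow> C * norm \<phi>" by (intro tendsto_intros dseq_lim D)
    show ?thesis
      by (rule tendsto_le[OF trivial_limit_sequentially 2 1]) (intro always_eventually allI C(2) dseq(1)[OF D])
  qed
  show "bounded_linear (ext D h)"
  proof (rule bounded_linear_intro)
    fix x y
    have "(\<lambda>n. h (dseq D x n + dseq D y n)) \<longlonglongrightarrow> ext D h (x + y)"
    proof (rule conv)
      show "dseq D x n + dseq D y n \<in> D" for n by (intro goodD_add[OF D] dseq(1)[OF D])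
      show "(\<lambda>n. dseq D x n + dseq D y n) \<longlonglongrightarrow> x + y" by (intro tendsto_add dseq_lim[OF D])
    qed
    moreover have "(\<lambda>n. h (dseq D x n + dseq D y n)) = (\<lambda>n. h (dseq D x n) + h (dseq D y n))"
      using h dseq(1)[OF D] unfolding Qlin_def by blast
    ultimately have "(\<lambda>n. h (dseq D x n) + h (dseq D y n)) \<longlonglongrightarrow> ext D h (x + y)" by simp
    then show "ext D h (x + y) = ext D h x + ext D h y"
      using LIMSEQ_unique tendsto_add[OF lim lim] by blast
  next
    fix r :: real and x
    define q where "q n = (SOME q. q \<in> \<rat> \<and> \<bar>q - r\<bar> < 1 / Suc n)" for n
    have "\<exists>q. q \<in> \<rat> \<and> \<bar>q - r\<bar> < 1 / Suc n" for n
      using Rats_dense_in_real[of r "r + 1 / Suc n"] by auto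
    then have q: "q n \<in> \<rat>" "\<bar>q n - r\<bar> < 1 / Suc n" for n
      unfolding q_def by (metis (mono_tags, lifting) someI_ex)+
    have qlim: "q \<longlonglongrightarrow> r"
    proof -
      have "(\<lambda>n. q n - r) \<longlonglongrightarrow> 0"
        by (rule Lim_null_comparison[OF _ LIMSEQ_inverse_real_of_nat])
           (intro always_eventually allI, use q(2) in \<open>auto simp: field_simps intro!: less_imp_le\<close>)
      then show ?thesis by (simp add: LIM_zero_iff)
    qed
    have "(\<lambda>n. h (q n *\<^sub>R dseq D x n)) \<longlonglongrightarrow> ext D h (r *\<^sub>R x)"
    proof (rule conv)
      show "q n *\<^sub>R dseq D x n \<in> D" for n by (intro goodD_scale[OF D] q(1) dseq(1)[OF D])
      show "(\<lambda>n. q n *\<^sub>R dseq D x n) \<longlonglongrightarrow> r *\<^sub>R x" by (intro tendsto_scaleR qlim dseq_lim[OF D])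
    qed
    moreover have "(\<lambda>n. h (q n *\<^sub>R dseq D x n)) = (\<lambda>n. q n * h (dseq D x n))"
      using h dseq(1)[OF D] q(1) unfolding Qlin_def by blast
    ultimately have "(\<lambda>n. q n * h (dseq D x n)) \<longlonglongrightarrow> ext D h (r *\<^sub>R x)" by simp
    then show "ext D h (r *\<^sub>R x) = r *\<^sub>R ext D h x"
      using LIMSEQ_unique tendsto_mult[OF qlim lim[of x]] by simp
  next
    show "norm (ext D h x) \<le> norm x * C" for x
      using bnd[of x] by (auto simp: mult.commute)
  qed
qed

lemma quot_le_norm: fixes L :: "'p::real_normed_vector \<Rightarrow>\<^sub>L real"
  shows "\<bar>L d\<bar> / norm d \<le> norm L"
proof (cases "d = 0")
  case False
  have "\<bar>L d\<bar> \<le> norm L * norm d" using norm_blinfun[of L d] by simp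
  then show ?thesis using False by (simp add: divide_le_eq mult.commute)
qed simp

lemma norm_blinfun_dense:
  fixes L :: "'p::real_normed_vector \<Rightarrow>\<^sub>L real"
  assumes D: "goodD D"
  shows "norm L = (SUP d\<in>D. \<bar>L d\<bar> / norm d)"
proof (rule antisym)
  have bdd: "bdd_above ((\<lambda>d. \<bar>L d\<bar> / norm d) ` D)"
    by (rule bdd_aboveI[of _ "norm L"]) (auto intro: quot_le_norm)
  obtain d0 where d0: "d0 \<in> D" using D unfolding goodD_def by (metis zero_less_one)
  then have Dne: "D \<noteq> {}" by blast
  define S where "S = (SUP d\<in>D. \<bar>L d\<bar> / norm d)"
  have S0: "0 \<le> S" unfolding S_def by (rule cSUP_upper2[OF bdd d0]) simp
  have dS: "\<bar>L d\<bar> \<le> S * norm d" if "d \<in> D" for d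
  proof (cases "d = 0")
    case False
    have "\<bar>L d\<bar> / norm d \<le> S" unfolding S_def by (rule cSUP_upper[OF that bdd])
    then show ?thesis using False by (simp add: divide_le_eq)
  qed (simp add: blinfun.zero_right)
  show "norm L \<le> S"
  proof (rule norm_blinfun_bound[OF S0])
    fix x
    have 1: "(\<lambda>n. \<bar>L (dseq D x n)\<bar>) \<longlonglongrightarrow> \<bar>L x\<bar>"
      by (intro tendsto_intros dseq_lim D) 
    have 2: "(\<lambda>n. S * norm (dseq D x n)) \<longlonglongrightarrow> S * norm x" by (intro tendsto_intros dseq_lim D)
    have "\<bar>L x\<bar> \<le> S * norm x"
      by (rule tendsto_le[OF trivial_limit_sequentially 2 1]) (intro always_eventually allI dS dseq(1)[OF D])
    then show "norm (L x) \<le> S * norm x" by simp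
  qed
  show "S \<le> norm L" unfolding S_def using Dne
    by (intro cSUP_least) (auto intro: quot_le_norm)
qed



lemma AE_pullback:
  assumes T[measurable]: "T \<in> measurable L L'" and dist: "distr L L' T = L'"
    and P: "AE y in L'. P y"
  shows "AE x in L. P (T x)"
proof -
  from P obtain N1 where N1: "{y \<in> space L'. \<not> P y} \<subseteq> N1" "emeasure L' N1 = 0" "N1 \<in> sets L'"
    by (rule AE_E)
  have pre: "T -` N1 \<inter> space L \<in> sets L" using N1(3) by measurable
  have "emeasure L (T -` N1 \<inter> space L) = emeasure (distr L L' T) N1"
    using N1(3) by (simp add: emeasure_distr)
  also have "\<dots> = 0" using dist N1(2) by simp
  finally have "T -` N1 \<inter> space L \<in> null_sets L" using pre by (intro null_setsI)
  moreover have "{x \<in> space L. \<not> P (T x)} \<subseteq> T -` N1 \<inter> space L"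
    using N1(1) measurable_space[OF T] by blast
  ultimately show ?thesis by (rule AE_I')
qed

lemma swap_distr:
  assumes "prob_space M"
  shows "(\<lambda>z. (snd z, fst z)) \<in> measurable (M \<Otimes>\<^sub>M M) (M \<Otimes>\<^sub>M M)"
    "distr (M \<Otimes>\<^sub>M M) (M \<Otimes>\<^sub>M M) (\<lambda>z. (snd z, fst z)) = M \<Otimes>\<^sub>M M"
proof -
  interpret M: prob_space M by fact
  interpret P: pair_sigma_finite M M by standard
  show "(\<lambda>z. (snd z, fst z)) \<in> measurable (M \<Otimes>\<^sub>M M) (M \<Otimes>\<^sub>M M)" by measurable
  have e: "(\<lambda>z. (snd z, fst z)) = (\<lambda>(x, y). (y, x))" by auto
  show "distr (M \<Otimes>\<^sub>M M) (M \<Otimes>\<^sub>M M) (\<lambda>z. (snd z, fst z)) = M \<Otimes>\<^sub>M M"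
    unfolding e by (rule P.distr_pair_swap[symmetric])
qed

lemma completion_integral_swap:
  fixes u :: "'a \<times> 'a \<Rightarrow> real"
  assumes M: "prob_space M"
    and u: "u \<in> borel_measurable (completion (M \<Otimes>\<^sub>M M))"
    and us: "(\<lambda>z. u (snd z, fst z)) \<in> borel_measurable (completion (M \<Otimes>\<^sub>M M))"
  shows "integral\<^sup>L (completion (M \<Otimes>\<^sub>M M)) (\<lambda>z. u (snd z, fst z)) = integral\<^sup>L (completion (M \<Otimes>\<^sub>M M)) u"
proof -
  note sw = swap_distr[OF M]
  obtain u0 where u0[measurable]: "u0 \<in> borel_measurable (M \<Otimes>\<^sub>M M)" and ae: "AE z in M \<Otimes>\<^sub>M M. u z = u0 z"
    using completion_ex_borel_measurable_real[OF u] by blast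
  have ae2: "AE z in M \<Otimes>\<^sub>M M. u (snd z, fst z) = u0 (snd z, fst z)"
    using AE_pullback[OF sw ae] by simp
  have m2: "(\<lambda>z. u0 (snd z, fst z)) \<in> borel_measurable (M \<Otimes>\<^sub>M M)" by measurable
  have "integral\<^sup>L (completion (M \<Otimes>\<^sub>M M)) (\<lambda>z. u (snd z, fst z))
      = integral\<^sup>L (completion (M \<Otimes>\<^sub>M M)) (\<lambda>z. u0 (snd z, fst z))"
    using us m2 ae2 by (intro integral_cong_AE) (auto intro: measurable_completion AE_completion)
  also have "\<dots> = integral\<^sup>L (M \<Otimes>\<^sub>M M) (\<lambda>z. u0 (snd z, fst z))"
    by (rule integral_completion[OF m2])
  also have "\<dots> = integral\<^sup>L (distr (M \<Otimes>\<^sub>M M) (M \<Otimes>\<^sub>M M) (\<lambda>z. (snd z, fst z))) u0"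
    by (rule integral_distr[symmetric, OF sw(1) u0])
  also have "\<dots> = integral\<^sup>L (M \<Otimes>\<^sub>M M) u0" using sw(2) by simp
  also have "\<dots> = integral\<^sup>L (completion (M \<Otimes>\<^sub>M M)) u0" by (rule integral_completion[symmetric, OF u0])
  also have "\<dots> = integral\<^sup>L (completion (M \<Otimes>\<^sub>M M)) u"
    using u ae by (intro integral_cong_AE) (auto intro: measurable_completion AE_completion)
  finally show ?thesis .
qed

lemma completion_modif:
  fixes f :: "'a \<Rightarrow> real"
  assumes f: "integrable (completion K) f"
  obtains f0 where "f0 \<in> borel_measurable K" "integrable K f0" "AE x in K. f x = f0 x"
    "\<And>A. A \<in> sets K \<Longrightarrow> set_lebesgue_integral (completion K) A f = set_lebesgue_integral K A f0"
proof -
  have fm: "f \<in> borel_measurable (completion K)" using f by (rule borel_measurable_integrable)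
  obtain f0 where f0[measurable]: "f0 \<in> borel_measurable K" and ae: "AE x in K. f x = f0 x"
    using completion_ex_borel_measurable_real[OF fm] by blast
  have "integrable (completion K) f0" using f ae fm
    by (intro integrable_cong_AE_imp[OF f]) (auto intro: measurable_completion AE_completion)
  then have i0: "integrable K f0" using integrable_completion[OF f0] by simp
  show ?thesis
  proof (rule that[OF f0 i0 ae])
    fix A assume A[measurable]: "A \<in> sets K"
    have [measurable]: "A \<in> sets (completion K)" "f \<in> borel_measurable (completion K)" using fm by auto
    have [measurable]: "f0 \<in> borel_measurable (completion K)" by (rule measurable_completion) measurable
    have "AE x in completion K. f x = f0 x" using ae by (rule AE_completion)
    then have "AE x in completion K. indicator A x * f x = indicator A x * f0 x" by eventually_elim simp
    then have "set_lebesgue_integral (completion K) A f = set_lebesgue_integral (completion K) A f0"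
      unfolding set_lebesgue_integral_def
      by (intro integral_cong_AE) (simp_all, measurable)
    also have "\<dots> = set_lebesgue_integral K A f0"
      unfolding set_lebesgue_integral_def by (rule integral_completion) measurable
    finally show "set_lebesgue_integral (completion K) A f = set_lebesgue_integral K A f0" .
  qed
qed

lemma blinfun_eq_dense:
  fixes L L' :: "'p::real_normed_vector \<Rightarrow>\<^sub>L real"
  assumes D: "goodD D" and eq: "\<And>a. a \<in> D \<Longrightarrow> L a = L' a"
  shows "L = L'"
proof -
  have "norm (L - L') = (SUP d\<in>D. \<bar>(L - L') d\<bar> / norm d)" by (rule norm_blinfun_dense[OF D])
  also have "\<dots> = (SUP d\<in>D. 0)" using eq by (intro SUP_cong) (auto simp: blinfun.diff_left)
  also have "\<dots> = 0"
  proof -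
    obtain d0 where "d0 \<in> D" using D unfolding goodD_def by (metis zero_less_one)
    then show ?thesis by (intro cSUP_const) blast
  qed
  finally show ?thesis by simp
qed

lemma eq_from_bounds:
  fixes X Y C :: real
  assumes "\<And>n. \<bar>X - Y\<bar> \<le> C / Suc n"
  shows "X = Y"
proof (rule ccontr)
  assume "X \<noteq> Y"
  then have d: "0 < \<bar>X - Y\<bar>" by simp
  obtain n :: nat where n: "C / \<bar>X - Y\<bar> < n" using reals_Archimedean2 by blast
  have "C < n * \<bar>X - Y\<bar>" using n d by (simp add: divide_less_eq)
  also have "\<dots> \<le> Suc n * \<bar>X - Y\<bar>" using d by (intro mult_right_mono) auto
  finally have "C / Suc n < \<bar>X - Y\<bar>" by (simp add: divide_less_eq mult.commute)
  with assms[of n] show False by simp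
qed

lemma char_lin:
  fixes u v :: "'b \<Rightarrow> real" and f g :: "'a \<Rightarrow> real"
  assumes u: "integrable N u" and v: "integrable N v" and f: "integrable K f" and g: "integrable K g"
    and E: "E \<in> sets N" and P: "P \<in> sets K"
    and eu: "set_lebesgue_integral N E u = set_lebesgue_integral K P f"
    and ev: "set_lebesgue_integral N E v = set_lebesgue_integral K P g"
  shows "set_lebesgue_integral N E (\<lambda>z. \<alpha> * u z + \<beta> * v z) = set_lebesgue_integral K P (\<lambda>x. \<alpha> * f x + \<beta> * g x)"
proof -
  have s: "set_integrable N E u" "set_integrable N E v" "set_integrable K P f" "set_integrable K P g"
    using u v f g E P unfolding set_integrable_def by (auto intro: ind_int)
  have s2: "set_integrable N E (\<lambda>z. \<alpha> * u z)" "set_integrable N E (\<lambda>z. \<beta> * v z)"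
    "set_integrable K P (\<lambda>z. \<alpha> * f z)" "set_integrable K P (\<lambda>z. \<beta> * g z)"
    using s by (auto intro: set_integrable_mult_right)
  show ?thesis
    using s s2 eu ev by (simp add: set_integral_add set_integral_mult_right)
qed



lemma setint_close:
  fixes u v b :: "'a \<Rightarrow> real"
  assumes u: "integrable M u" and v: "integrable M v" and b: "integrable M b" and E: "E \<in> sets M"
    and bd: "\<And>z. z \<in> space M \<Longrightarrow> \<bar>u z - v z\<bar> \<le> c * b z"
  shows "\<bar>set_lebesgue_integral M E u - set_lebesgue_integral M E v\<bar> \<le> c * integral\<^sup>L M b"
proof -
  have s: "set_integrable M E u" "set_integrable M E v"
    using u v E unfolding set_integrable_def by (auto intro: ind_int)
  have e1: "set_lebesgue_integral M E u - set_lebesgue_integral M E v = integral\<^sup>L M (\<lambda>z. indicator E z * (u z - v z))"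
    using set_integral_diff(2)[OF s] unfolding set_lebesgue_integral_def by (simp add: algebra_simps)
  have e2: "\<bar>integral\<^sup>L M (\<lambda>z. indicator E z * (u z - v z))\<bar> \<le> integral\<^sup>L M (\<lambda>z. \<bar>indicator E z * (u z - v z)\<bar>)"
    using integral_norm_bound[of M "\<lambda>z. indicator E z * (u z - v z)"] by simp
  have e3: "integral\<^sup>L M (\<lambda>z. \<bar>indicator E z * (u z - v z)\<bar>) \<le> integral\<^sup>L M (\<lambda>z. c * b z)"
  proof (rule integral_mono)
    show "integrable M (\<lambda>z. \<bar>indicator E z * (u z - v z)\<bar>)"
      using u v E by (intro integrable_abs ind_int Bochner_Integration.integrable_diff)
    show "integrable M (\<lambda>z. c * b z)" using b by simp
    fix z assume z: "z \<in> space M"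
    have "0 \<le> c * b z" using bd[OF z] by linarith
    then show "\<bar>indicator E z * (u z - v z)\<bar> \<le> c * b z" using bd[OF z]
      by (cases "z \<in> E") (simp_all add: abs_mult)
  qed
  have e4: "integral\<^sup>L M (\<lambda>z. c * b z) = c * integral\<^sup>L M b" by simp
  show ?thesis unfolding e1 using e2 e3 e4 by linarith
qed

theorem mainTheorem5:
  fixes M :: "'a measure" and M' :: "'b measure" and \<tau> :: "'a \<Rightarrow> 'b"
    and W :: "'a \<Rightarrow> 'a \<Rightarrow> ('p::{banach,second_countable_topology} \<Rightarrow>\<^sub>L real)"
  assumes "prob_space M" and "prob_space M'"
    and "meas_pres M M' \<tau>"
    and "Zgraphon M W"
  shows "\<exists>W' :: 'b \<Rightarrow> 'b \<Rightarrow> ('p \<Rightarrow>\<^sub>L real).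
           strong_Zgraphon M' W' \<and>
           (\<forall>A1\<in>sets M'. \<forall>A2\<in>sets M'. \<forall>\<phi>.
              set_lebesgue_integral (M' \<Otimes>\<^sub>M M') (A1 \<times> A2)
                 (\<lambda>z. blinfun_apply (W' (fst z) (snd z)) \<phi>)
            = set_lebesgue_integral (completion (M \<Otimes>\<^sub>M M))
                 ((\<tau> -` A1 \<inter> space M) \<times> (\<tau> -` A2 \<inter> space M))
                 (\<lambda>z. blinfun_apply (W (fst z) (snd z)) \<phi>)) \<and>
           (embedding M M' \<tau> \<longrightarrow>
              (AE z in M \<Otimes>\<^sub>M M. W' (\<tau> (fst z)) (\<tau> (snd z)) = W (fst z) (snd z)))"
proof -
  note Mp = assms(1) and M'p = assms(2)
  interpret M: prob_space M by fact
  interpret M': prob_space M' by fact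
  define K0 where "K0 = M \<Otimes>\<^sub>M M"
  define K where "K = completion K0"
  define N where "N = M' \<Otimes>\<^sub>M M'"
  define \<rho> where "\<rho> = (\<lambda>z::'a\<times>'a. (\<tau> (fst z), \<tau> (snd z)))"
  have tau[measurable]: "\<tau> \<in> measurable M M'" using assms(3) by (simp add: meas_pres_def)
  have distM: "distr M M' \<tau> = M'"
    by (rule measure_eqI) (use assms(3) in \<open>auto simp: meas_pres_def emeasure_distr\<close>)
  have K0prob: "prob_space K0" unfolding K0_def by (rule prob_space_pair) (fact+)
  have Kprob: "prob_space K" unfolding K_def using K0prob by (rule prob_space.prob_space_completion)
  have Nprob: "prob_space N" unfolding N_def by (rule prob_space_pair) (fact+)
  interpret K0: prob_space K0 by fact
  interpret K: prob_space K by fact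
  interpret N: prob_space N by fact
  have Kf: "finite_measure K" using Kprob by (simp add: prob_space_def)
  have Nf: "finite_measure N" using Nprob by (simp add: prob_space_def)
  have Nsf: "sigma_finite_measure N" using Nprob by (rule prob_space_imp_sigma_finite)
  have rho0[measurable]: "\<rho> \<in> measurable K0 N" unfolding \<rho>_def K0_def N_def by measurable
  have dist0: "distr K0 N \<rho> = N"
  proof -
    have "sigma_finite_measure (distr M M' \<tau>)" using distM prob_space_imp_sigma_finite[OF M'p] by simp
    from pair_measure_distr[OF tau tau this] distM
    have "M' \<Otimes>\<^sub>M M' = distr (M \<Otimes>\<^sub>M M) (M' \<Otimes>\<^sub>M M') (\<lambda>(x, y). (\<tau> x, \<tau> y))" by simp
    moreover have "(\<lambda>(x, y). (\<tau> x, \<tau> y)) = \<rho>" unfolding \<rho>_def by auto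
    ultimately show ?thesis unfolding K0_def N_def by simp
  qed
  have rho[measurable]: "\<rho> \<in> measurable K N" unfolding K_def by (rule measurable_completion[OF rho0])
  have dist: "distr K N \<rho> = N" unfolding K_def by (simp add: distr_completion[OF rho0] dist0)
  have spK: "space K = space M \<times> space M" "space K0 = space M \<times> space M" unfolding K_def K0_def by (simp_all add: space_pair_measure)
  have spN: "space N = space M' \<times> space M'" unfolding N_def by (simp add: space_pair_measure)
  have preR: "\<rho> -` (A1 \<times> A2) \<inter> space K = (\<tau> -` A1 \<inter> space M) \<times> (\<tau> -` A2 \<inter> space M)" for A1 A2
    by (auto simp: \<rho>_def spK)
  have Wsym: "\<And>x y. x \<in> space M \<Longrightarrow> y \<in> space M \<Longrightarrow> W x y = W y x"
    using assms(4) by (simp add: Zgraphon_def)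
  define F where "F \<phi> z = blinfun_apply (W (fst z) (snd z)) \<phi>" for \<phi> z
  define nW where "nW z = norm (W (fst z) (snd z))" for z
  have Fm[measurable]: "F \<phi> \<in> borel_measurable K" for \<phi>
    using assms(4) unfolding Zgraphon_def F_def K_def K0_def by blast
  have nWm[measurable]: "nW \<in> borel_measurable K"
    using assms(4) unfolding Zgraphon_def nW_def K_def K0_def by blast
  have nWp: "integrable K (\<lambda>z. nW z powr p)" if "1 \<le> p" for p
    using assms(4) that unfolding Zgraphon_def nW_def K_def K0_def by blast
  have nW0: "0 \<le> nW z" for z unfolding nW_def by simp
  have nWi: "integrable K nW" using nWp[of 1] by (simp add: nW_def[abs_def])
  have Fb: "\<bar>F \<phi> z\<bar> \<le> nW z * norm \<phi>" for \<phi> z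
    unfolding F_def nW_def using norm_blinfun[of "W (fst z) (snd z)" \<phi>] by simp
  have Fi: "integrable K (F \<phi>)" for \<phi>
  proof (rule Bochner_Integration.integrable_bound)
    show "integrable K (\<lambda>z. nW z * norm \<phi>)" using nWi by simp
    show "AE z in K. norm (F \<phi> z) \<le> norm (nW z * norm \<phi>)" using Fb nW0 by (intro AE_I2) simp
  qed simp
  define ch where "ch f = (SOME g. g \<in> borel_measurable N \<and> integrable N g \<and>
     (\<forall>E\<in>sets N. set_lebesgue_integral N E g = set_lebesgue_integral K (\<rho> -` E \<inter> space K) f))" for f :: "'a \<times> 'a \<Rightarrow> real"
  have ch: "ch f \<in> borel_measurable N" "integrable N (ch f)"
     "\<And>E. E \<in> sets N \<Longrightarrow> set_lebesgue_integral N E (ch f) = set_lebesgue_integral K (\<rho> -` E \<inter> space K) f"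
    if "integrable K f" for f :: "'a \<times> 'a \<Rightarrow> real"
  proof -
    have "\<exists>g. g \<in> borel_measurable N \<and> integrable N g \<and>
     (\<forall>E\<in>sets N. set_lebesgue_integral N E g = set_lebesgue_integral K (\<rho> -` E \<inter> space K) f)"
      using push_exists[OF Kf Nsf rho dist that] by blast
    from someI_ex[OF this] show "ch f \<in> borel_measurable N" "integrable N (ch f)"
     "\<And>E. E \<in> sets N \<Longrightarrow> set_lebesgue_integral N E (ch f) = set_lebesgue_integral K (\<rho> -` E \<inter> space K) f"
      unfolding ch_def[symmetric] by auto
  qed
  define Vf where "Vf \<phi> = ch (F \<phi>)" for \<phi>
  define gW where "gW = ch nW"
  have Vfm[measurable]: "Vf \<phi> \<in> borel_measurable N" and Vfi: "integrable N (Vf \<phi>)"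
    and Vfc: "E \<in> sets N \<Longrightarrow> set_lebesgue_integral N E (Vf \<phi>) = set_lebesgue_integral K (\<rho> -` E \<inter> space K) (F \<phi>)"
    for \<phi> E unfolding Vf_def using ch[OF Fi] by auto
  have gWm[measurable]: "gW \<in> borel_measurable N" and gWi: "integrable N gW"
    and gWc: "E \<in> sets N \<Longrightarrow> set_lebesgue_integral N E gW = set_lebesgue_integral K (\<rho> -` E \<inter> space K) nW"
    for E unfolding gW_def using ch[OF nWi] by auto
  have preS: "\<rho> -` E \<inter> space K \<in> sets K" if "E \<in> sets N" for E using that by measurable
  obtain D :: "'p set" where D: "goodD D" using goodD_exists by blast
  have cD: "countable D" using D by (rule goodD_countable)
  have aeA: "AE z in N. Vf (a + b) z = Vf a z + Vf b z" for a b
  proof (rule set_integrals_eq_AE[OF Vfi])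
    show "integrable N (\<lambda>z. Vf a z + Vf b z)" using Vfi[of a] Vfi[of b] by (rule Bochner_Integration.integrable_add)
    fix E assume E: "E \<in> sets N"
    have "set_lebesgue_integral N E (Vf (a + b)) = set_lebesgue_integral K (\<rho> -` E \<inter> space K) (F (a + b))"
      by (rule Vfc[OF E])
    also have "F (a + b) = (\<lambda>x. 1 * F a x + 1 * F b x)" by (auto simp: F_def blinfun.add_right)
    also have "set_lebesgue_integral K (\<rho> -` E \<inter> space K) \<dots> = set_lebesgue_integral N E (\<lambda>z. 1 * Vf a z + 1 * Vf b z)"
      by (rule char_lin[OF Vfi Vfi Fi Fi E preS[OF E] Vfc[OF E] Vfc[OF E], symmetric])
    finally show "set_lebesgue_integral N E (Vf (a + b)) = set_lebesgue_integral N E (\<lambda>z. Vf a z + Vf b z)" by simp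
  qed
  have aeB: "AE z in N. Vf (q *\<^sub>R a) z = q * Vf a z" for q a
  proof (rule set_integrals_eq_AE[OF Vfi])
    show "integrable N (\<lambda>z. q * Vf a z)" using Vfi by simp
    fix E assume E: "E \<in> sets N"
    have "set_lebesgue_integral N E (Vf (q *\<^sub>R a)) = set_lebesgue_integral K (\<rho> -` E \<inter> space K) (F (q *\<^sub>R a))"
      by (rule Vfc[OF E])
    also have "F (q *\<^sub>R a) = (\<lambda>x. q * F a x + 0 * F a x)" by (auto simp: F_def blinfun.scaleR_right)
    also have "set_lebesgue_integral K (\<rho> -` E \<inter> space K) \<dots> = set_lebesgue_integral N E (\<lambda>z. q * Vf a z + 0 * Vf a z)"
      by (rule char_lin[OF Vfi Vfi Fi Fi E preS[OF E] Vfc[OF E] Vfc[OF E], symmetric])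
    finally show "set_lebesgue_integral N E (Vf (q *\<^sub>R a)) = set_lebesgue_integral N E (\<lambda>z. q * Vf a z)" by simp
  qed
  have aeC: "AE z in N. 0 \<le> norm a * gW z + \<sigma> * Vf a z" if \<sigma>: "\<sigma> = 1 \<or> \<sigma> = -1" for a \<sigma>
  proof (rule set_integrals_nonneg_AE)
    show "integrable N (\<lambda>z. norm a * gW z + \<sigma> * Vf a z)" using gWi Vfi by simp
    fix E assume E: "E \<in> sets N"
    have "set_lebesgue_integral N E (\<lambda>z. norm a * gW z + \<sigma> * Vf a z)
      = set_lebesgue_integral K (\<rho> -` E \<inter> space K) (\<lambda>x. norm a * nW x + \<sigma> * F a x)"
      by (rule char_lin[OF gWi Vfi nWi Fi E preS[OF E] gWc[OF E] Vfc[OF E]])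
    also have "0 \<le> \<dots>"
    proof (rule set_int_nonneg)
      fix x show "0 \<le> norm a * nW x + \<sigma> * F a x" using Fb[of a x] \<sigma> by (auto simp: mult.commute)
    qed
    finally show "0 \<le> set_lebesgue_integral N E (\<lambda>z. norm a * gW z + \<sigma> * Vf a z)" .
  qed
  have aeD: "AE z in N. 0 \<le> gW z"
  proof (rule set_integrals_nonneg_AE[OF gWi])
    fix E assume E: "E \<in> sets N"
    show "0 \<le> set_lebesgue_integral N E gW" unfolding gWc[OF E] by (rule set_int_nonneg[OF nW0])
  qed
  define Good where "Good z \<longleftrightarrow> (\<forall>a\<in>D. \<forall>b\<in>D. Vf (a + b) z = Vf a z + Vf b z) \<and>
      (\<forall>q\<in>\<rat>. \<forall>a\<in>D. Vf (q *\<^sub>R a) z = q * Vf a z) \<and>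
      (\<forall>a\<in>D. 0 \<le> norm a * gW z + 1 * Vf a z) \<and> (\<forall>a\<in>D. 0 \<le> norm a * gW z + (-1) * Vf a z) \<and>
      0 \<le> gW z" for z
  have "AE z in N. Good z"
    unfolding Good_def
    by (intro eventually_conj aeD AE_ball_countable' cD countable_rat aeA aeB aeC) simp_all
  then obtain N0 where N0: "{z \<in> space N. \<not> Good z} \<subseteq> N0" "emeasure N N0 = 0" "N0 \<in> sets N"
    by (rule AE_E)
  define G where "G = space N - N0"
  have Gs[measurable]: "G \<in> sets N" unfolding G_def using N0(3) by auto
  have GG: "z \<in> G \<Longrightarrow> Good z" for z using N0(1) unfolding G_def by blast
  have aeG: "AE z in N. z \<in> G"
    by (rule AE_I'[of N0]) (use N0 in \<open>auto simp: G_def intro: null_setsI\<close>)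
  have Gprops: "Qlin D (\<lambda>d. Vf d z)" "0 \<le> gW z" "\<And>a. a \<in> D \<Longrightarrow> \<bar>Vf a z\<bar> \<le> gW z * norm a"
    if "z \<in> G" for z
  proof -
    have g: "Good z" using GG[OF that] .
    then show "Qlin D (\<lambda>d. Vf d z)" unfolding Good_def Qlin_def by blast
    show "0 \<le> gW z" using g unfolding Good_def by blast
    fix a assume "a \<in> D"
    then have "0 \<le> norm a * gW z + Vf a z" "0 \<le> norm a * gW z + (-1) * Vf a z" using g unfolding Good_def by auto
    then show "\<bar>Vf a z\<bar> \<le> gW z * norm a" by (simp add: mult.commute abs_le_iff)
  qed
  have ep: "bounded_linear (ext D (\<lambda>d. Vf d z))" "\<And>a. a \<in> D \<Longrightarrow> ext D (\<lambda>d. Vf d z) a = Vf a z"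
    "\<And>\<phi>. \<bar>ext D (\<lambda>d. Vf d z) \<phi>\<bar> \<le> gW z * norm \<phi>"
    "\<And>\<phi>. (\<lambda>n. Vf (dseq D \<phi> n) z) \<longlonglongrightarrow> ext D (\<lambda>d. Vf d z) \<phi>" if "z \<in> G" for z
    using ext_props[OF D Gprops(1)[OF that] Gprops(2)[OF that] Gprops(3)[OF that]] by auto
  define V where "V z = (if z \<in> G then Blinfun (ext D (\<lambda>d. Vf d z)) else 0)" for z
  have VG: "blinfun_apply (V z) = ext D (\<lambda>d. Vf d z)" if "z \<in> G" for z
    unfolding V_def using that ep(1)[OF that] by (simp add: bounded_linear_Blinfun_apply)
  have VnG: "V z = 0" if "z \<notin> G" for z unfolding V_def using that by simp
  have VD: "V z a = Vf a z" if "z \<in> G" "a \<in> D" for z a using VG[OF that(1)] ep(2)[OF that(1) that(2)] by simp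
  have Vlim: "(\<lambda>n. Vf (dseq D \<phi> n) z) \<longlonglongrightarrow> V z \<phi>" if "z \<in> G" for z \<phi>
    using VG[OF that] ep(4)[OF that] by simp
  have Vabs: "\<bar>V z \<phi>\<bar> \<le> \<bar>gW z\<bar> * norm \<phi>" for z \<phi>
  proof (cases "z \<in> G")
    case True
    then show ?thesis using VG[OF True] ep(3)[OF True, of \<phi>] Gprops(2)[OF True] by simp
  qed (simp add: VnG)
  have Vnorm: "norm (V z) \<le> \<bar>gW z\<bar>" for z
    by (rule norm_blinfun_bound) (use Vabs in auto)
  have Vm[measurable]: "(\<lambda>z. V z \<phi>) \<in> borel_measurable N" for \<phi>
  proof (rule borel_measurable_LIMSEQ_real)
    show "(\<lambda>n. indicator G z * Vf (dseq D \<phi> n) z) \<longlonglongrightarrow> V z \<phi>" if "z \<in> space N" for z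
      by (cases "z \<in> G") (simp_all add: Vlim VnG)
    show "(\<lambda>z. indicator G z * Vf (dseq D \<phi> n) z) \<in> borel_measurable N" for n by measurable
  qed
  have Vi: "integrable N (\<lambda>z. V z \<phi>)" for \<phi>
  proof (rule Bochner_Integration.integrable_bound)
    show "integrable N (\<lambda>z. \<bar>gW z\<bar> * norm \<phi>)" using gWi by simp
    show "AE z in N. norm (V z \<phi>) \<le> norm (\<bar>gW z\<bar> * norm \<phi>)" using Vabs by (intro AE_I2) simp
  qed simp
  have VcharD: "set_lebesgue_integral N E (\<lambda>z. V z a) = set_lebesgue_integral K (\<rho> -` E \<inter> space K) (F a)"
    if E: "E \<in> sets N" and a: "a \<in> D" for E a
  proof -
    have ae: "AE z in N. indicator E z *\<^sub>R V z a = indicator E z *\<^sub>R Vf a z"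
      using aeG by (rule AE_mp) (intro AE_I2 impI, simp add: VD a)
    have m1: "(\<lambda>z. indicator E z *\<^sub>R V z a) \<in> borel_measurable N"
      by (intro borel_measurable_scaleR borel_measurable_indicator E Vm)
    have m2: "(\<lambda>z. indicator E z *\<^sub>R Vf a z) \<in> borel_measurable N"
      by (intro borel_measurable_scaleR borel_measurable_indicator E Vfm)
    have "set_lebesgue_integral N E (\<lambda>z. V z a) = set_lebesgue_integral N E (Vf a)"
      unfolding set_lebesgue_integral_def by (rule integral_cong_AE[OF m1 m2 ae])
    then show ?thesis using Vfc[OF E] by simp
  qed
  have Vchar: "set_lebesgue_integral N E (\<lambda>z. V z \<phi>) = set_lebesgue_integral K (\<rho> -` E \<inter> space K) (F \<phi>)"
    if E: "E \<in> sets N" for E \<phi>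
  proof -
    define C where "C = integral\<^sup>L N (\<lambda>z. \<bar>gW z\<bar>) + integral\<^sup>L K nW"
    show ?thesis
    proof (rule eq_from_bounds[where C = C])
      fix n
      define d where "d = dseq D \<phi> n"
      have dD: "d \<in> D" unfolding d_def by (rule dseq(1)[OF D])
      have dn: "norm (\<phi> - d) \<le> 1 / Suc n" using dseq(2)[OF D, of \<phi> n] unfolding d_def
        by (simp add: dist_norm norm_minus_commute)
      have c1: "\<bar>set_lebesgue_integral N E (\<lambda>z. V z \<phi>) - set_lebesgue_integral N E (\<lambda>z. V z d)\<bar>
          \<le> norm (\<phi> - d) * integral\<^sup>L N (\<lambda>z. \<bar>gW z\<bar>)"
      proof (rule setint_close[OF Vi Vi _ E])
        show "integrable N (\<lambda>z. \<bar>gW z\<bar>)" using gWi by simp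
        fix z
        have "V z \<phi> - V z d = V z (\<phi> - d)" by (simp add: blinfun.diff_right)
        then show "\<bar>V z \<phi> - V z d\<bar> \<le> norm (\<phi> - d) * \<bar>gW z\<bar>" using Vabs[of z "\<phi> - d"] by (simp add: mult.commute)
      qed
      have c2: "\<bar>set_lebesgue_integral K (\<rho> -` E \<inter> space K) (F \<phi>) - set_lebesgue_integral K (\<rho> -` E \<inter> space K) (F d)\<bar>
          \<le> norm (\<phi> - d) * integral\<^sup>L K nW"
      proof (rule setint_close[OF Fi Fi nWi preS[OF E]])
        fix z
        have "F \<phi> z - F d z = F (\<phi> - d) z" by (simp add: F_def blinfun.diff_right)
        then show "\<bar>F \<phi> z - F d z\<bar> \<le> norm (\<phi> - d) * nW z" using Fb[of "\<phi> - d" z] by (simp add: mult.commute)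
      qed
      have eqd: "set_lebesgue_integral N E (\<lambda>z. V z d) = set_lebesgue_integral K (\<rho> -` E \<inter> space K) (F d)"
        by (rule VcharD[OF E dD])
      have I1: "0 \<le> integral\<^sup>L N (\<lambda>z. \<bar>gW z\<bar>)" by simp
      have I2: "0 \<le> integral\<^sup>L K nW" using nW0 by (simp add: integral_nonneg_AE)
      have "\<bar>set_lebesgue_integral N E (\<lambda>z. V z \<phi>) - set_lebesgue_integral K (\<rho> -` E \<inter> space K) (F \<phi>)\<bar>
          \<le> norm (\<phi> - d) * integral\<^sup>L N (\<lambda>z. \<bar>gW z\<bar>) + norm (\<phi> - d) * integral\<^sup>L K nW"
        using c1 c2 eqd by arith
      also have "\<dots> = norm (\<phi> - d) * C" unfolding C_def by (simp add: distrib_left)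
      also have "\<dots> \<le> (1 / Suc n) * C" using dn I1 I2 unfolding C_def by (intro mult_right_mono) auto
      finally show "\<bar>set_lebesgue_integral N E (\<lambda>z. V z \<phi>) - set_lebesgue_integral K (\<rho> -` E \<inter> space K) (F \<phi>)\<bar>
          \<le> C / Suc n" by simp
    qed
  qed
  define W' where "W' x y = (1/2::real) *\<^sub>R (V (x, y) + V (y, x))" for x y
  define sw where "sw = (\<lambda>z::'b\<times>'b. (snd z, fst z))"
  have swm[measurable]: "sw \<in> measurable N N" and swd: "distr N N sw = N"
    using swap_distr[OF M'p] unfolding sw_def N_def by auto
  have W'z: "W' (fst z) (snd z) \<phi> = (V z \<phi> + V (sw z) \<phi>) / 2" for z \<phi>
    by (simp add: W'_def sw_def scaleR_blinfun.rep_eq plus_blinfun.rep_eq)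
  have Vsm[measurable]: "(\<lambda>z. V (sw z) \<phi>) \<in> borel_measurable N" for \<phi>
    using measurable_compose[OF swm Vm] by simp
  have W'm[measurable]: "(\<lambda>z. W' (fst z) (snd z) \<phi>) \<in> borel_measurable N" for \<phi>
    unfolding W'z by measurable
  have Bs[measurable]: "\<tau> -` A \<inter> space M \<in> sets M" if "A \<in> sets M'" for A using that by measurable
  have charI: "set_lebesgue_integral N (A1 \<times> A2) (\<lambda>z. W' (fst z) (snd z) \<phi>)
      = set_lebesgue_integral K ((\<tau> -` A1 \<inter> space M) \<times> (\<tau> -` A2 \<inter> space M)) (F \<phi>)"
    if A1: "A1 \<in> sets M'" and A2: "A2 \<in> sets M'" for A1 A2 \<phi>
  proof -
    define B1 where "B1 = \<tau> -` A1 \<inter> space M"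
    define B2 where "B2 = \<tau> -` A2 \<inter> space M"
    have R[measurable]: "A1 \<times> A2 \<in> sets N" "A2 \<times> A1 \<in> sets N" unfolding N_def using A1 A2 by auto
    have indsw: "indicator (A1 \<times> A2) z = indicator (A2 \<times> A1) (sw z)" for z :: "'b \<times> 'b"
      by (cases z) (auto simp: sw_def indicator_def)
    have i1: "integrable N (\<lambda>z. indicator (A1 \<times> A2) z * V z \<phi>)" by (rule ind_int[OF R(1) Vi])
    have i2': "integrable N (\<lambda>w. indicator (A2 \<times> A1) w * V w \<phi>)" by (rule ind_int[OF R(2) Vi])
    have i2: "integrable N (\<lambda>z. indicator (A1 \<times> A2) z * V (sw z) \<phi>)"
      unfolding indsw using integrable_distr[OF swm, of "\<lambda>w. indicator (A2 \<times> A1) w * V w \<phi>"] i2' swd by simp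
    have "set_lebesgue_integral N (A1 \<times> A2) (\<lambda>z. W' (fst z) (snd z) \<phi>)
        = integral\<^sup>L N (\<lambda>z. (indicator (A1 \<times> A2) z * V z \<phi> + indicator (A1 \<times> A2) z * V (sw z) \<phi>) / 2)"
      unfolding set_lebesgue_integral_def W'z by (simp add: algebra_simps)
    also have "\<dots> = (integral\<^sup>L N (\<lambda>z. indicator (A1 \<times> A2) z * V z \<phi>)
        + integral\<^sup>L N (\<lambda>z. indicator (A1 \<times> A2) z * V (sw z) \<phi>)) / 2"
      using i1 i2 by simp
    also have "integral\<^sup>L N (\<lambda>z. indicator (A1 \<times> A2) z * V (sw z) \<phi>)
        = integral\<^sup>L N (\<lambda>w. indicator (A2 \<times> A1) w * V w \<phi>)"
      unfolding indsw
      using integral_distr[OF swm, of "\<lambda>w. indicator (A2 \<times> A1) w * V w \<phi>"] swd by simp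
    also have "integral\<^sup>L N (\<lambda>w. indicator (A2 \<times> A1) w * V w \<phi>) = set_lebesgue_integral K (B2 \<times> B1) (F \<phi>)"
      using Vchar[OF R(2), of \<phi>] preR[of A2 A1] unfolding set_lebesgue_integral_def B1_def B2_def by simp
    also have "integral\<^sup>L N (\<lambda>z. indicator (A1 \<times> A2) z * V z \<phi>) = set_lebesgue_integral K (B1 \<times> B2) (F \<phi>)"
      using Vchar[OF R(1), of \<phi>] preR[of A1 A2] unfolding set_lebesgue_integral_def B1_def B2_def by simp
    also have "set_lebesgue_integral K (B2 \<times> B1) (F \<phi>) = set_lebesgue_integral K (B1 \<times> B2) (F \<phi>)"
    proof -
      have B[measurable]: "B1 \<in> sets M" "B2 \<in> sets M" unfolding B1_def B2_def using A1 A2 by auto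
      define u where "u z = indicator (B2 \<times> B1) z * F \<phi> z" for z
      have Fmc: "F \<phi> \<in> borel_measurable (completion (M \<Otimes>\<^sub>M M))" using Fm[of \<phi>] unfolding K_def K0_def .
      have Bc: "B2 \<times> B1 \<in> sets (completion (M \<Otimes>\<^sub>M M))" "B1 \<times> B2 \<in> sets (completion (M \<Otimes>\<^sub>M M))"
        using B by auto
      have um: "u \<in> borel_measurable (completion (M \<Otimes>\<^sub>M M))"
        unfolding u_def[abs_def] by (intro borel_measurable_times borel_measurable_indicator Bc Fmc)
      have us: "u (snd z, fst z) = indicator (B1 \<times> B2) z * F \<phi> z" if "z \<in> space (completion (M \<Otimes>\<^sub>M M))" for z
        using that Wsym by (auto simp: u_def F_def indicator_def space_pair_measure)
      have usm: "(\<lambda>z. u (snd z, fst z)) \<in> borel_measurable (completion (M \<Otimes>\<^sub>M M))"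
        by (subst measurable_cong[OF us]) (assumption, intro borel_measurable_times borel_measurable_indicator Bc Fmc)
      have "set_lebesgue_integral K (B1 \<times> B2) (F \<phi>) = integral\<^sup>L (completion (M \<Otimes>\<^sub>M M)) (\<lambda>z. u (snd z, fst z))"
        unfolding set_lebesgue_integral_def K_def K0_def by (rule Bochner_Integration.integral_cong) (simp_all add: us)
      also have "\<dots> = integral\<^sup>L (completion (M \<Otimes>\<^sub>M M)) u" by (rule completion_integral_swap[OF Mp um usm])
      also have "\<dots> = set_lebesgue_integral K (B2 \<times> B1) (F \<phi>)"
        unfolding set_lebesgue_integral_def K_def K0_def u_def by simp
      finally show ?thesis by simp
    qed
    finally show ?thesis unfolding B1_def B2_def by simp
  qed
  have nW'eq: "norm (W' (fst z) (snd z)) = (SUP d\<in>D. \<bar>W' (fst z) (snd z) d\<bar> / norm d)" for z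
    by (rule norm_blinfun_dense[OF D])
  have nW'm[measurable]: "(\<lambda>z. norm (W' (fst z) (snd z))) \<in> borel_measurable N"
  proof -
    have "(\<lambda>z. SUP d\<in>D. \<bar>W' (fst z) (snd z) d\<bar> / norm d) \<in> borel_measurable N"
    proof (rule borel_measurable_cSUP[OF cD])
      show "(\<lambda>z. \<bar>W' (fst z) (snd z) d\<bar> / norm d) \<in> borel_measurable N" for d by measurable
      show "bdd_above ((\<lambda>d. \<bar>W' (fst z) (snd z) d\<bar> / norm d) ` D)" for z
        by (rule bdd_aboveI[of _ "norm (W' (fst z) (snd z))"]) (auto intro: quot_le_norm)
    qed
    then show ?thesis unfolding nW'eq .
  qed
  have nW'b: "norm (W' (fst z) (snd z)) \<le> (\<bar>gW z\<bar> + \<bar>gW (sw z)\<bar>) / 2" for z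
  proof -
    have "norm (W' (fst z) (snd z)) = norm (V z + V (sw z)) / 2"
      by (simp add: W'_def sw_def)
    also have "\<dots> \<le> (norm (V z) + norm (V (sw z))) / 2" using norm_triangle_ineq[of "V z" "V (sw z)"] by simp
    also have "\<dots> \<le> (\<bar>gW z\<bar> + \<bar>gW (sw z)\<bar>) / 2" using Vnorm[of z] Vnorm[of "sw z"] by simp
    finally show ?thesis .
  qed
  have gWp: "integrable N (\<lambda>z. \<bar>gW z\<bar> powr p)" if p: "1 \<le> p" for p
  proof -
    define kP where "kP = ch (\<lambda>z. nW z powr p)"
    note kch = ch[OF nWp[OF p]]
    have jen: "AE z in N. 0 < gW z \<longrightarrow> gW z powr p \<le> kP z"
      unfolding kP_def
      by (rule jensen_push[OF Kf Nf rho dist p nWi nW0 nWp[OF p] gWi gWc kch(2) kch(3)])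
    show ?thesis
    proof (rule Bochner_Integration.integrable_bound)
      show "integrable N kP" unfolding kP_def by (rule kch(2))
      show "(\<lambda>z. \<bar>gW z\<bar> powr p) \<in> borel_measurable N" by measurable
      show "AE z in N. norm (\<bar>gW z\<bar> powr p) \<le> norm (kP z)"
        using jen aeD
      proof eventually_elim
        case (elim z)
        show ?case
        proof (cases "gW z = 0")
          case True then show ?thesis using p by simp
        next
          case False
          then have "0 < gW z" using elim(2) by simp
          then show ?thesis using elim(1) by simp
        qed
      qed
    qed
  qed
  have gWsp: "integrable N (\<lambda>z. \<bar>gW (sw z)\<bar> powr p)" if p: "1 \<le> p" for p
    using integrable_distr[OF swm, of "\<lambda>z. \<bar>gW z\<bar> powr p"] gWp[OF p] swd by simp
  have strong: "strong_Zgraphon M' W'"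
    unfolding strong_Zgraphon_def Zgraphon_def
  proof (intro conjI allI impI ballI)
    show "W' x y = W' y x" for x y by (simp add: W'_def add.commute)
    show "(\<lambda>z. W' (fst z) (snd z) \<phi>) \<in> borel_measurable (completion (M' \<Otimes>\<^sub>M M'))" for \<phi>
      using measurable_completion[OF W'm[of \<phi>]] unfolding N_def .
    show "(\<lambda>z. W' (fst z) (snd z) \<phi>) \<in> borel_measurable (M' \<Otimes>\<^sub>M M')" for \<phi>
      using W'm[of \<phi>] unfolding N_def .
    show "(\<lambda>z. norm (W' (fst z) (snd z))) \<in> borel_measurable (completion (M' \<Otimes>\<^sub>M M'))"
      using measurable_completion[OF nW'm] unfolding N_def .
    fix p :: real assume p: "1 \<le> p"
    have m: "(\<lambda>z. norm (W' (fst z) (snd z)) powr p) \<in> borel_measurable N" by measurable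
    have "integrable N (\<lambda>z. norm (W' (fst z) (snd z)) powr p)"
    proof (rule Bochner_Integration.integrable_bound)
      show "integrable N (\<lambda>z. \<bar>gW z\<bar> powr p + \<bar>gW (sw z)\<bar> powr p)"
        using gWp[OF p] gWsp[OF p] by (rule Bochner_Integration.integrable_add)
      show "AE z in N. norm (norm (W' (fst z) (snd z)) powr p) \<le> norm (\<bar>gW z\<bar> powr p + \<bar>gW (sw z)\<bar> powr p)"
      proof (rule AE_I2)
        fix z
        define a where "a = \<bar>gW z\<bar>"
        define b where "b = \<bar>gW (sw z)\<bar>"
        have ab: "0 \<le> a" "0 \<le> b" unfolding a_def b_def by simp_all
        have m2: "(a + b) / 2 \<le> max a b" by (cases "a \<le> b") (auto simp: max_def)
        have "norm (W' (fst z) (snd z)) \<le> (a + b) / 2" using nW'b[of z] unfolding a_def b_def .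
        then have "norm (W' (fst z) (snd z)) \<le> max a b" using m2 by linarith
        then have "norm (W' (fst z) (snd z)) powr p \<le> max a b powr p"
          using p by (intro powr_mono2) auto
        also have "\<dots> \<le> a powr p + b powr p" by (cases "a \<le> b") (simp_all add: max_def)
        finally show "norm (norm (W' (fst z) (snd z)) powr p) \<le> norm (\<bar>gW z\<bar> powr p + \<bar>gW (sw z)\<bar> powr p)"
          unfolding a_def b_def by simp
      qed
    qed (rule m)
    then show "integrable (completion (M' \<Otimes>\<^sub>M M')) (\<lambda>z. norm (W' (fst z) (snd z)) powr p)"
      using integrable_completion[OF m] unfolding N_def by simp
  qed
  have partII: "AE z in M \<Otimes>\<^sub>M M. W' (\<tau> (fst z)) (\<tau> (snd z)) = W (fst z) (snd z)"
    if emb: "embedding M M' \<tau>"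
  proof -
    obtain S where S: "bij_betw \<tau> (space M) S"
      and SB: "\<forall>B\<in>sets M. \<exists>A\<in>sets M'. \<tau> ` B = A \<inter> S \<and> emeasure M B = emeasure M' A"
      using emb unfolding embedding_def by blast
    have inj: "inj_on \<tau> (space M)" and img: "\<tau> ` space M = S" using S by (auto simp: bij_betw_def)
    have vim: "\<exists>A\<in>sets M'. B = \<tau> -` A \<inter> space M" if B: "B \<in> sets M" for B
    proof -
      obtain A where A: "A \<in> sets M'" "\<tau> ` B = A \<inter> S" using SB B by blast
      have Bsp: "B \<subseteq> space M" using B by (rule sets.sets_into_space)
      have "B = \<tau> -` A \<inter> space M"
      proof
        show "B \<subseteq> \<tau> -` A \<inter> space M" using A(2) Bsp by blast
        show "\<tau> -` A \<inter> space M \<subseteq> B"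
        proof
          fix x assume x: "x \<in> \<tau> -` A \<inter> space M"
          then have "\<tau> x \<in> A \<inter> S" using img by blast
          then obtain y where y: "y \<in> B" "\<tau> y = \<tau> x" using A(2) by (metis imageE)
          then have "y = x" using inj x Bsp by (auto dest: inj_onD)
          then show "x \<in> B" using y by simp
        qed
      qed
      then show ?thesis using A(1) by blast
    qed
    define \<Omega> where "\<Omega> = space M \<times> space M"
    define \<Omega>' where "\<Omega>' = space M' \<times> space M'"
    have rhoF: "\<rho> \<in> \<Omega> \<rightarrow> \<Omega>'" unfolding \<rho>_def \<Omega>_def \<Omega>'_def using measurable_space[OF tau] by auto
    have rects: "{a \<times> b | a b. a \<in> sets M \<and> b \<in> sets M}
        = {\<rho> -` R \<inter> \<Omega> | R. R \<in> {A1 \<times> A2 | A1 A2. A1 \<in> sets M' \<and> A2 \<in> sets M'}}"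
    proof (intro equalityI subsetI)
      fix X assume "X \<in> {a \<times> b | a b. a \<in> sets M \<and> b \<in> sets M}"
      then obtain a b where X: "X = a \<times> b" "a \<in> sets M" "b \<in> sets M" by blast
      obtain A1 where A1: "A1 \<in> sets M'" "a = \<tau> -` A1 \<inter> space M" using vim[OF X(2)] by blast
      obtain A2 where A2: "A2 \<in> sets M'" "b = \<tau> -` A2 \<inter> space M" using vim[OF X(3)] by blast
      have "X = \<rho> -` (A1 \<times> A2) \<inter> \<Omega>" unfolding X A1 A2 \<Omega>_def \<rho>_def by auto
      then show "X \<in> {\<rho> -` R \<inter> \<Omega> | R. R \<in> {A1 \<times> A2 | A1 A2. A1 \<in> sets M' \<and> A2 \<in> sets M'}}"
        using A1(1) A2(1) by blast
    next
      fix X assume "X \<in> {\<rho> -` R \<inter> \<Omega> | R. R \<in> {A1 \<times> A2 | A1 A2. A1 \<in> sets M' \<and> A2 \<in> sets M'}}"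
      then obtain A1 A2 where X: "X = \<rho> -` (A1 \<times> A2) \<inter> \<Omega>" "A1 \<in> sets M'" "A2 \<in> sets M'" by blast
      have "X = (\<tau> -` A1 \<inter> space M) \<times> (\<tau> -` A2 \<inter> space M)" unfolding X \<Omega>_def \<rho>_def by auto
      then show "X \<in> {a \<times> b | a b. a \<in> sets M \<and> b \<in> sets M}" using Bs[OF X(2)] Bs[OF X(3)] by blast
    qed
    have setsK0: "sets K0 = {\<rho> -` E \<inter> space K0 | E. E \<in> sets N}"
    proof -
      have "sets K0 = sigma_sets \<Omega> {a \<times> b | a b. a \<in> sets M \<and> b \<in> sets M}"
        unfolding K0_def \<Omega>_def by (rule sets_pair_measure)
      also have "\<dots> = sigma_sets \<Omega> {\<rho> -` R \<inter> \<Omega> | R. R \<in> {A1 \<times> A2 | A1 A2. A1 \<in> sets M' \<and> A2 \<in> sets M'}}"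
        unfolding rects ..
      also have "\<dots> = {\<rho> -` E \<inter> \<Omega> | E. E \<in> sigma_sets \<Omega>' {A1 \<times> A2 | A1 A2. A1 \<in> sets M' \<and> A2 \<in> sets M'}}"
        by (rule sigma_sets_vimage_commute[OF rhoF, symmetric])
      also have "sigma_sets \<Omega>' {A1 \<times> A2 | A1 A2. A1 \<in> sets M' \<and> A2 \<in> sets M'} = sets N"
        unfolding N_def \<Omega>'_def by (rule sets_pair_measure[symmetric])
      finally show ?thesis unfolding \<Omega>_def spK .
    qed
    have aeW: "AE z in K0. Vf a (\<rho> z) = F a z" if a: "a \<in> D" for a
    proof -
      obtain f0 where f0: "f0 \<in> borel_measurable K0" "integrable K0 f0" "AE x in K0. F a x = f0 x"
        "\<And>A. A \<in> sets K0 \<Longrightarrow> set_lebesgue_integral K A (F a) = set_lebesgue_integral K0 A f0"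
        using completion_modif[of K0 "F a"] Fi[of a] unfolding K_def by blast
      have ui: "integrable K0 (\<lambda>z. Vf a (\<rho> z))"
        using integrable_distr[OF rho0, of "Vf a"] Vfi[of a] dist0 by simp
      have "AE z in K0. Vf a (\<rho> z) = f0 z"
      proof (rule set_integrals_eq_AE[OF ui f0(2)])
        fix E assume E: "E \<in> sets K0"
        then obtain E' where E': "E' \<in> sets N" "E = \<rho> -` E' \<inter> space K0" using setsK0 by blast
        have "set_lebesgue_integral K0 E (\<lambda>z. Vf a (\<rho> z)) = integral\<^sup>L K0 (\<lambda>z. indicator E' (\<rho> z) * Vf a (\<rho> z))"
          unfolding set_lebesgue_integral_def E'(2)
          by (rule Bochner_Integration.integral_cong) (auto simp: indicator_def)
        also have "\<dots> = integral\<^sup>L N (\<lambda>w. indicator E' w * Vf a w)"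
          using integral_distr[OF rho0, of "\<lambda>w. indicator E' w * Vf a w"] E'(1) dist0 by simp
        also have "\<dots> = set_lebesgue_integral K (\<rho> -` E' \<inter> space K) (F a)"
          using Vfc[OF E'(1), of a] unfolding set_lebesgue_integral_def by simp
        also have "\<rho> -` E' \<inter> space K = E" unfolding E'(2) spK ..
        also have "set_lebesgue_integral K E (F a) = set_lebesgue_integral K0 E f0" by (rule f0(4)[OF E])
        finally show "set_lebesgue_integral K0 E (\<lambda>z. Vf a (\<rho> z)) = set_lebesgue_integral K0 E f0" .
      qed
      with f0(3) show ?thesis by eventually_elim simp
    qed
    define P where "P z \<longleftrightarrow> \<rho> z \<in> G \<and> (\<forall>a\<in>D. Vf a (\<rho> z) = F a z)" for z
    have aeP: "AE z in K0. P z"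
      unfolding P_def
      by (intro eventually_conj AE_pullback[OF rho0 dist0 aeG] AE_ball_countable' cD aeW)
    have aeP2: "AE z in K0. P (snd z, fst z)"
      using AE_pullback[OF swap_distr[OF Mp] aeP[unfolded K0_def]] unfolding K0_def .
    have "AE z in K0. W' (\<tau> (fst z)) (\<tau> (snd z)) = W (fst z) (snd z)"
      using aeP aeP2 AE_space[of K0]
    proof eventually_elim
      case (elim z)
      have zs: "z \<in> space M \<times> space M" using elim(3) spK(2) by simp
      then have z: "fst z \<in> space M" "snd z \<in> space M" by (simp_all add: mem_Times_iff)
      have P1c: "\<rho> z \<in> G \<and> (\<forall>a\<in>D. Vf a (\<rho> z) = F a z)" by (rule iffD1[OF P_def[of z] elim(1)])
      have P1: "\<rho> z \<in> G" "\<forall>a\<in>D. Vf a (\<rho> z) = F a z" using P1c by (rule conjunct1, rule conjunct2)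
      have P2c: "\<rho> (snd z, fst z) \<in> G \<and> (\<forall>a\<in>D. Vf a (\<rho> (snd z, fst z)) = F a (snd z, fst z))"
        by (rule iffD1[OF P_def[of "(snd z, fst z)"] elim(2)])
      have P2: "\<rho> (snd z, fst z) \<in> G" "\<forall>a\<in>D. Vf a (\<rho> (snd z, fst z)) = F a (snd z, fst z)"
        using P2c by (rule conjunct1, rule conjunct2)
      have V1: "V (\<rho> z) = W (fst z) (snd z)"
      proof (rule blinfun_eq_dense[OF D])
        fix a assume a: "a \<in> D"
        have "V (\<rho> z) a = Vf a (\<rho> z)" by (rule VD[OF P1(1) a])
        also have "\<dots> = F a z" using P1(2) a by blast
        finally show "V (\<rho> z) a = W (fst z) (snd z) a" unfolding F_def .
      qed
      have V2: "V (\<rho> (snd z, fst z)) = W (fst z) (snd z)"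
      proof (rule blinfun_eq_dense[OF D])
        fix a assume a: "a \<in> D"
        have "V (\<rho> (snd z, fst z)) a = Vf a (\<rho> (snd z, fst z))" by (rule VD[OF P2(1) a])
        also have "\<dots> = F a (snd z, fst z)" using P2(2) a by blast
        also have "\<dots> = W (snd z) (fst z) a" unfolding F_def by simp
        also have "W (snd z) (fst z) = W (fst z) (snd z)" using Wsym[OF z] by simp
        finally show "V (\<rho> (snd z, fst z)) a = W (fst z) (snd z) a" .
      qed
      have "W' (\<tau> (fst z)) (\<tau> (snd z)) = (1/2::real) *\<^sub>R (V (\<rho> z) + V (\<rho> (snd z, fst z)))"
        unfolding W'_def \<rho>_def by simp
      also have "\<dots> = (1/2::real) *\<^sub>R ((2::real) *\<^sub>R W (fst z) (snd z))" unfolding V1 V2 scaleR_2 ..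
      also have "\<dots> = W (fst z) (snd z)" by simp
      finally show ?case .
    qed
    then show ?thesis unfolding K0_def .
  qed
  show ?thesis
  proof (intro exI conjI ballI allI impI)
    show "strong_Zgraphon M' W'" by (rule strong)
    show "embedding M M' \<tau> \<Longrightarrow> AE z in M \<Otimes>\<^sub>M M. W' (\<tau> (fst z)) (\<tau> (snd z)) = W (fst z) (snd z)"
      by (rule partII)
    fix A1 A2 \<phi> assume A1: "A1 \<in> sets M'" and A2: "A2 \<in> sets M'"
    show "set_lebesgue_integral (M' \<Otimes>\<^sub>M M') (A1 \<times> A2) (\<lambda>z. W' (fst z) (snd z) \<phi>)
        = set_lebesgue_integral (completion (M \<Otimes>\<^sub>M M)) ((\<tau> -` A1 \<inter> space M) \<times> (\<tau> -` A2 \<inter> space M))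
            (\<lambda>z. W (fst z) (snd z) \<phi>)"
      using charI[OF A1 A2, of \<phi>] unfolding N_def K_def K0_def F_def[abs_def] by simp
  qed
qed


end
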